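(* Let $R$ be a principal ideal domain and $n\geq 2$. Let $J$ be the complex of representations of $(Q_{\mathfrak{A}_n},\rho_{\mathfrak{A}_n})$ with $J^{-1}=I_{H_1}\oplus I_{H_2}$, $J^0=\bigoplus_{i=1}^n I_{E_i}\oplus\bigoplus_{i=1}^n I_{P_i}$, $J^1=\bigoplus_{i=1}^n I_{P_i}$, zero elsewhere, with differential $J^{-1}\to J^0$ given by $\begin{pmatrix}\partial^0\\0\end{pmatrix}$ and $J^0\to J^1$ given by $(\partial^1\ \ 0)$, where $\partial^0:I_{H_1}\oplus I_{H_2}\to\bigoplus_i I_{E_i}$ has $E_i$-component $he_{1i}\oplus(-he_{2i})$, and $\partial^1:\bigoplus_j I_{E_j}\to\bigoplus_i I_{P_i}$ has $P_i$-component $e_{ii}$ on $I_{E_i}$, $-e_{(i+1)i}$ on $I_{E_{i+1}}$ and zero on all other summands (indices mod $n$). (This is a resolution of $W_1\oplus\dots\oplus W_n\oplus C[1]$, where $W_i$ has $R$ at $P_i$ and $0$ elsewhere and $C$ has $R$ at every vertex with identity maps.) Then $\operatorname{End} J$ is formal: there are a dg subalgebra $\mathcal{U}\subset\operatorname{End} J$ and a two-sided dg ideal $\mathcal{I}\subset\mathcal{U}$ giving a chain of quasi-isomorphisms of dg algebras $\operatorname{End} J\hookleftarrow\mathcal{U}\twoheadrightarrow\mathcal{U}/\mathcal{I}\hookleftarrow H(\mathcal{U}/\mathcal{I})$.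
   Context: $\mathfrak{A}_n$ ($n\geq 2$) is the stratification of $S^2$ into $n$ points $P_1,\dots,P_n$ in cyclic order on a great circle, the $n$ open arcs $E_1,\dots,E_n$ of that circle, where $E_i$ has endpoints $P_{i-1}$ and $P_i$ (indices mod $n$, so $E_1$ joins $P_n$ and $P_1$), and the two open hemispheres $H_1,H_2$. The quiver $(Q_{\mathfrak{A}_n},\rho_{\mathfrak{A}_n})$ has one vertex per stratum, an arrow $S\to T$ whenever $S\subsetneq\overline T$, and relations identifying all paths with the same endpoints; representations are by $R$-modules. For a stratum $S$, $I_S$ is the representation with $R$ at every vertex $T$ with $T\subset\overline S$ and $0$ elsewhere, identity maps on arrows between copies of $R$, zero otherwise. For $T\subset\overline S$ the canonical morphism $I_S\to I_T$ is the identity of $R$ wherever both have $R$ and zero elsewhere; $he_{ji}:I_{H_j}\to I_{E_i}$ and $e_{ik}:I_{E_i}\to I_{P_k}$ (for $k\in\{i-1,i\}$ mod $n$) denote these canonical morphisms. $\operatorname{End} J$ is the Hom complex of $J$ with its dg algebra structure; a dg algebra is formal if it is connected to its cohomology algebra (zero differential) by a finite chain of quasi-isomorphisms (more generally quasi-equivalences). *)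

theory Defs
  imports Main
begin

definition ideal_r :: "'r::idom set \<Rightarrow> bool" where
  "ideal_r I \<longleftrightarrow> 0 \<in> I \<and> (\<forall>a\<in>I. \<forall>b\<in>I. a + b \<in> I) \<and> (\<forall>a\<in>I. \<forall>r. r * a \<in> I)"

definition is_pid :: "'r::idom itself \<Rightarrow> bool" where
  "is_pid _ \<longleftrightarrow> (\<forall>I::'r set. ideal_r I \<longrightarrow> (\<exists>a. I = range (\<lambda>r. r * a)))"

text \<open>Points P 1..P n, arcs E 1..E n (E i joins P (i-1) and P i, indices mod n,
  E 1 joins P n and P 1), hemispheres H 1, H 2.\<close>

datatype stratum = P nat | E nat | H nat

definition strata :: "nat \<Rightarrow> stratum set" where
  "strata n = {P i | i. 1 \<le> i \<and> i \<le> n} \<union> {E i | i. 1 \<le> i \<and> i \<le> n} \<union> {H 1, H 2}"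

definition predc :: "nat \<Rightarrow> nat \<Rightarrow> nat" where
  "predc n i = (if i = 1 then n else i - 1)"

definition succc :: "nat \<Rightarrow> nat \<Rightarrow> nat" where
  "succc n i = (if i = n then 1 else i + 1)"

text \<open>in_cl n S T: S is contained in the closure of T.\<close>
definition in_cl :: "nat \<Rightarrow> stratum \<Rightarrow> stratum \<Rightarrow> bool" where
  "in_cl n S T \<longleftrightarrow> S \<in> strata n \<and> T \<in> strata n \<and>
     (S = T
      \<or> (\<exists>i k. S = P k \<and> T = E i \<and> (k = i \<or> k = predc n i))
      \<or> (\<exists>j. T = H j \<and> (\<exists>i. S = P i \<or> S = E i)))"

definition arrow :: "nat \<Rightarrow> stratum \<Rightarrow> stratum \<Rightarrow> bool" where
  "arrow n S T \<longleftrightarrow> in_cl n S T \<and> S \<noteq> T"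

text \<open>The value at vertex T of the direct sum of I_X over X in L: vectors indexed by the
  summand labels, with coordinate X allowed nonzero only if T lies in the closure of X
  (where I_X has R).\<close>
definition Isum :: "nat \<Rightarrow> stratum set \<Rightarrow> stratum \<Rightarrow> (stratum \<Rightarrow> 'r::idom) set" where
  "Isum n L T = {v. \<forall>X. v X \<noteq> 0 \<longrightarrow> X \<in> L \<and> in_cl n T X}"

text \<open>Structure map of such a direct sum along an arrow T \<rightarrow> T': identity on the copies of
  R present at both vertices, zero otherwise.\<close>
definition restr :: "nat \<Rightarrow> stratum \<Rightarrow> (stratum \<Rightarrow> 'r::idom) \<Rightarrow> (stratum \<Rightarrow> 'r)" where
  "restr n T' v = (\<lambda>X. if in_cl n T' X then v X else 0)"

text \<open>Morphism between direct sums given by a matrix c of coefficients times the canonical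
  morphisms I_X \<rightarrow> I_Y, at vertex T.\<close>
definition canmap :: "nat \<Rightarrow> (stratum \<Rightarrow> stratum \<Rightarrow> 'r::idom) \<Rightarrow> stratum
                       \<Rightarrow> (stratum \<Rightarrow> 'r) \<Rightarrow> (stratum \<Rightarrow> 'r)" where
  "canmap n c T v = (\<lambda>Y. if in_cl n T Y then (\<Sum>X\<in>strata n. c Y X * v X) else 0)"

definition summJ :: "nat \<Rightarrow> int \<Rightarrow> stratum set" where
  "summJ n k =
     (if k = -1 then {H 1, H 2}
      else if k = 0 then {E i | i. 1 \<le> i \<and> i \<le> n} \<union> {P i | i. 1 \<le> i \<and> i \<le> n}
      else if k = 1 then {P i | i. 1 \<le> i \<and> i \<le> n}
      else {})"

definition Jmod :: "nat \<Rightarrow> int \<Rightarrow> stratum \<Rightarrow> (stratum \<Rightarrow> 'r::idom) set" where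
  "Jmod n k T = Isum n (summJ n k) T"

definition cd0 :: "nat \<Rightarrow> stratum \<Rightarrow> stratum \<Rightarrow> 'r::idom" where
  "cd0 n Y X = (if (\<exists>i. 1 \<le> i \<and> i \<le> n \<and> Y = E i)
                then (if X = H 1 then 1 else if X = H 2 then -1 else 0) else 0)"

definition cd1 :: "nat \<Rightarrow> stratum \<Rightarrow> stratum \<Rightarrow> 'r::idom" where
  "cd1 n Y X = (if (\<exists>i. 1 \<le> i \<and> i \<le> n \<and> Y = P i)
                then (case Y of P i \<Rightarrow>
                        (if X = E i then 1 else 0) - (if X = E (succc n i) then 1 else 0)
                      | _ \<Rightarrow> 0)
                else 0)"

definition dJ :: "nat \<Rightarrow> int \<Rightarrow> stratum \<Rightarrow> (stratum \<Rightarrow> 'r::idom) \<Rightarrow> (stratum \<Rightarrow> 'r)" where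
  "dJ n k T v =
     (if v \<in> Jmod n k T then
        (if k = -1 then canmap n (cd0 n) T v
         else if k = 0 then canmap n (cd1 n) T v
         else (\<lambda>_. 0))
      else (\<lambda>_. 0))"

text \<open>An element f of degree p: for every k and vertex T a map J^k(T) \<rightarrow> J^{k+p}(T)
  (extended by 0 outside J^k(T)), R-linear, commuting with the structure maps.\<close>
type_synonym 'r endo = "int \<Rightarrow> stratum \<Rightarrow> (stratum \<Rightarrow> 'r) \<Rightarrow> (stratum \<Rightarrow> 'r)"

definition hom :: "nat \<Rightarrow> int \<Rightarrow> 'r::idom endo \<Rightarrow> bool" where
  "hom n p f \<longleftrightarrow> (\<forall>k T.
      (\<forall>v. v \<notin> Jmod n k T \<longrightarrow> f k T v = (\<lambda>_. 0))
    \<and> (\<forall>v\<in>Jmod n k T. f k T v \<in> Jmod n (k + p) T)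
    \<and> (\<forall>v\<in>Jmod n k T. \<forall>w\<in>Jmod n k T. f k T (\<lambda>X. v X + w X) = (\<lambda>Y. f k T v Y + f k T w Y))
    \<and> (\<forall>v\<in>Jmod n k T. \<forall>r. f k T (\<lambda>X. r * v X) = (\<lambda>Y. r * f k T v Y))
    \<and> (\<forall>T'. arrow n T T' \<longrightarrow> (\<forall>v\<in>Jmod n k T. restr n T' (f k T v) = f k T' (restr n T' v))))"

definition EndJ :: "nat \<Rightarrow> int \<Rightarrow> 'r::idom endo set" where
  "EndJ n p = {f. hom n p f}"

definition zeroE :: "'r::idom endo" where
  "zeroE = (\<lambda>k T v Y. 0)"

definition addE :: "'r::idom endo \<Rightarrow> 'r endo \<Rightarrow> 'r endo" where
  "addE f g = (\<lambda>k T v Y. f k T v Y + g k T v Y)"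

definition smulE :: "'r::idom \<Rightarrow> 'r endo \<Rightarrow> 'r endo" where
  "smulE r f = (\<lambda>k T v Y. r * f k T v Y)"

definition subE :: "'r::idom endo \<Rightarrow> 'r endo \<Rightarrow> 'r endo" where
  "subE f g = (\<lambda>k T v Y. f k T v Y - g k T v Y)"

definition compE :: "int \<Rightarrow> 'r::idom endo \<Rightarrow> 'r endo \<Rightarrow> 'r endo" where
  "compE p g f = (\<lambda>k T v. g (k + p) T (f k T v))"

definition idE :: "nat \<Rightarrow> 'r::idom endo" where
  "idE n = (\<lambda>k T v. if v \<in> Jmod n k T then v else (\<lambda>_. 0))"

definition dEnd :: "nat \<Rightarrow> int \<Rightarrow> 'r::idom endo \<Rightarrow> 'r endo" where
  "dEnd n p f = (\<lambda>k T v Y. dJ n (k + p) T (f k T v) Y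
                           - (if even p then 1 else -1) * f (k + 1) T (dJ n k T v) Y)"

definition submod :: "'r::idom endo set \<Rightarrow> bool" where
  "submod A \<longleftrightarrow> zeroE \<in> A \<and> (\<forall>f\<in>A. \<forall>g\<in>A. addE f g \<in> A) \<and> (\<forall>r. \<forall>f\<in>A. smulE r f \<in> A)"

definition dg_subalg :: "nat \<Rightarrow> (int \<Rightarrow> 'r::idom endo set) \<Rightarrow> (int \<Rightarrow> 'r endo set) \<Rightarrow> bool" where
  "dg_subalg n A B \<longleftrightarrow> idE n \<in> A 0 \<and>
     (\<forall>p. A p \<subseteq> B p \<and> submod (A p) \<and> dEnd n p ` A p \<subseteq> A (p + 1) \<and>
          (\<forall>q. \<forall>f\<in>A p. \<forall>g\<in>A q. compE p g f \<in> A (p + q)))"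

definition dg_ideal :: "nat \<Rightarrow> (int \<Rightarrow> 'r::idom endo set) \<Rightarrow> (int \<Rightarrow> 'r endo set) \<Rightarrow> bool" where
  "dg_ideal n I U \<longleftrightarrow>
     (\<forall>p. I p \<subseteq> U p \<and> submod (I p) \<and> dEnd n p ` I p \<subseteq> I (p + 1) \<and>
          (\<forall>q. \<forall>f\<in>U p. \<forall>g\<in>I q. compE p g f \<in> I (p + q) \<and> compE q f g \<in> I (p + q)))"

definition zeroG :: "int \<Rightarrow> 'r::idom endo set" where
  "zeroG = (\<lambda>p. {zeroE})"

text \<open>Cohomology of a quotient complex A/K (K \<subseteq> A subcomplexes of End J), described on
  representatives: cycles of A/K and the boundary relation of A/K.\<close>
definition qcycles :: "nat \<Rightarrow> (int \<Rightarrow> 'r::idom endo set) \<Rightarrow> (int \<Rightarrow> 'r endo set) \<Rightarrow> int \<Rightarrow> 'r endo set" where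
  "qcycles n A K p = {a \<in> A p. dEnd n p a \<in> K (p + 1)}"

definition qbdry :: "nat \<Rightarrow> (int \<Rightarrow> 'r::idom endo set) \<Rightarrow> (int \<Rightarrow> 'r endo set) \<Rightarrow> int \<Rightarrow> 'r endo \<Rightarrow> bool" where
  "qbdry n A K p a \<longleftrightarrow> (\<exists>b\<in>A (p - 1). \<exists>x\<in>K p. a = addE (dEnd n (p - 1) b) x)"

text \<open>The chain map A/K \<rightarrow> B/L induced by the inclusion (A \<subseteq> B, K \<subseteq> L) is a
  quasi-isomorphism: the induced map on cohomology is injective and surjective in every degree.\<close>
definition qis :: "nat \<Rightarrow> (int \<Rightarrow> 'r::idom endo set) \<Rightarrow> (int \<Rightarrow> 'r endo set)
                   \<Rightarrow> (int \<Rightarrow> 'r endo set) \<Rightarrow> (int \<Rightarrow> 'r endo set) \<Rightarrow> bool" where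
  "qis n A K B L \<longleftrightarrow> (\<forall>p.
      (\<forall>a\<in>qcycles n A K p. qbdry n B L p a \<longrightarrow> qbdry n A K p a)
    \<and> (\<forall>b\<in>qcycles n B L p. \<exists>a\<in>qcycles n A K p. qbdry n B L p (subE b a)))"

end

theory Submission
  imports Defs
begin

lemma finite_strata[simp]: "finite (strata n)"
proof -
  have "strata n = P ` {1..n} \<union> E ` {1..n} \<union> {H 1, H 2}"
    unfolding strata_def by auto
  thus ?thesis by simp
qed

lemma P_strata[simp]: "P a \<in> strata n \<longleftrightarrow> 1 \<le> a \<and> a \<le> n"
  and E_strata[simp]: "E a \<in> strata n \<longleftrightarrow> 1 \<le> a \<and> a \<le> n"
  and H_strata[simp]: "H j \<in> strata n \<longleftrightarrow> j = 1 \<or> j = 2"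
  unfolding strata_def by auto

lemma P_summJ[simp]: "P a \<in> summJ n k \<longleftrightarrow> (k = 0 \<or> k = 1) \<and> 1 \<le> a \<and> a \<le> n"
  and E_summJ[simp]: "E a \<in> summJ n k \<longleftrightarrow> k = 0 \<and> 1 \<le> a \<and> a \<le> n"
  and H_summJ[simp]: "H j \<in> summJ n k \<longleftrightarrow> k = -1 \<and> (j = 1 \<or> j = 2)"
  unfolding summJ_def by auto

lemma summJ_strata: "X \<in> summJ n k \<Longrightarrow> X \<in> strata n"
  by (cases X) auto

lemma in_cl_strata: "in_cl n S T \<Longrightarrow> S \<in> strata n \<and> T \<in> strata n"
  unfolding in_cl_def by auto

lemma in_cl_refl[simp]: "in_cl n S S \<longleftrightarrow> S \<in> strata n"
  unfolding in_cl_def by auto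

lemma predc_succc:
  assumes "1 \<le> a" "a \<le> n" "1 \<le> b" "b \<le> n"
  shows "a = predc n b \<longleftrightarrow> b = succc n a"
  using assms unfolding predc_def succc_def by auto

lemma succc_range: "1 \<le> a \<Longrightarrow> a \<le> n \<Longrightarrow> 1 \<le> succc n a \<and> succc n a \<le> n"
  unfolding succc_def by auto

lemma succc_ge1[simp]: "1 \<le> a \<Longrightarrow> Suc 0 \<le> succc n a"
  and succc_le[simp]: "1 \<le> a \<Longrightarrow> a \<le> n \<Longrightarrow> succc n a \<le> n"
  unfolding succc_def by auto

lemma succc_neq: "2 \<le> n \<Longrightarrow> 1 \<le> a \<Longrightarrow> a \<le> n \<Longrightarrow> succc n a \<noteq> a"
  unfolding succc_def by auto

lemma in_cl_PP[simp]: "in_cl n (P a) (P b) \<longleftrightarrow> a = b \<and> 1 \<le> a \<and> a \<le> n"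
  and in_cl_PE[simp]: "in_cl n (P a) (E b) \<longleftrightarrow> 1 \<le> a \<and> a \<le> n \<and> 1 \<le> b \<and> b \<le> n \<and> (b = a \<or> b = succc n a)"
  and in_cl_PH[simp]: "in_cl n (P a) (H j) \<longleftrightarrow> 1 \<le> a \<and> a \<le> n \<and> (j = 1 \<or> j = 2)"
  and in_cl_EP[simp]: "in_cl n (E a) (P b) \<longleftrightarrow> False"
  and in_cl_EE[simp]: "in_cl n (E a) (E b) \<longleftrightarrow> a = b \<and> 1 \<le> a \<and> a \<le> n"
  and in_cl_EH[simp]: "in_cl n (E a) (H j) \<longleftrightarrow> 1 \<le> a \<and> a \<le> n \<and> (j = 1 \<or> j = 2)"
  and in_cl_HP[simp]: "in_cl n (H i) (P b) \<longleftrightarrow> False"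
  and in_cl_HE[simp]: "in_cl n (H i) (E b) \<longleftrightarrow> False"
  and in_cl_HH[simp]: "in_cl n (H i) (H j) \<longleftrightarrow> i = j \<and> (i = 1 \<or> i = 2)"
  unfolding in_cl_def using predc_succc[of a n b] by auto

lemma in_cl_trans: "in_cl n A B \<Longrightarrow> in_cl n B C \<Longrightarrow> in_cl n A C"
  by (cases A; cases B; cases C) auto

lemma cd0_simps[simp]:
  "cd0 n (E i) (H j) = (if 1 \<le> i \<and> i \<le> n then (if j = 1 then 1 else if j = 2 then -1 else 0) else 0)"
  "cd0 n (E i) (E j) = 0" "cd0 n (E i) (P j) = 0"
  "cd0 n (P i) X = 0" "cd0 n (H i) X = 0"
  unfolding cd0_def by auto

lemma cd1_simps[simp]:
  "cd1 n (P i) X = (if 1 \<le> i \<and> i \<le> n then (if X = E i then 1 else 0) - (if X = E (succc n i) then 1 else 0) else 0)"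
  "cd1 n (E i) X = 0" "cd1 n (H i) X = 0"
  unfolding cd1_def by auto

definition delta :: "stratum \<Rightarrow> stratum \<Rightarrow> 'r::idom" where
  "delta X = (\<lambda>Z. if Z = X then 1 else 0)"

definition coef :: "'r::idom endo \<Rightarrow> int \<Rightarrow> stratum \<Rightarrow> stratum \<Rightarrow> 'r" where
  "coef f k Y X = f k Y (delta X) Y"

definition rel :: "nat \<Rightarrow> int \<Rightarrow> int \<Rightarrow> stratum \<Rightarrow> stratum \<Rightarrow> bool" where
  "rel n p k Y X \<longleftrightarrow> X \<in> summJ n k \<and> Y \<in> summJ n (k + p) \<and> in_cl n Y X"

definition ct :: "nat \<Rightarrow> int \<Rightarrow> (int \<Rightarrow> stratum \<Rightarrow> stratum \<Rightarrow> 'r::idom) \<Rightarrow> int \<Rightarrow> stratum \<Rightarrow> stratum \<Rightarrow> 'r" where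
  "ct n p c = (\<lambda>k Y X. if rel n p k Y X then c k Y X else 0)"

definition mat :: "nat \<Rightarrow> (int \<Rightarrow> stratum \<Rightarrow> stratum \<Rightarrow> 'r::idom) \<Rightarrow> 'r endo" where
  "mat n c = (\<lambda>k T v. if v \<in> Jmod n k T
      then (\<lambda>Y. if in_cl n T Y then \<Sum>X\<in>strata n. c k Y X * v X else 0) else (\<lambda>_. 0))"

definition Mat :: "nat \<Rightarrow> int \<Rightarrow> (int \<Rightarrow> stratum \<Rightarrow> stratum \<Rightarrow> 'r::idom) \<Rightarrow> 'r endo" where
  "Mat n p c = mat n (ct n p c)"

lemma Jmod_iff: "v \<in> Jmod n k T \<longleftrightarrow> (\<forall>X. v X \<noteq> 0 \<longrightarrow> X \<in> summJ n k \<and> in_cl n T X)"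
  unfolding Jmod_def Isum_def by auto

lemma zero_Jmod[simp]: "(\<lambda>_. 0) \<in> Jmod n k T"
  unfolding Jmod_iff by auto

lemma Mat_apply: "Mat n p c k T v = (if v \<in> Jmod n k T
      then (\<lambda>Y. if in_cl n T Y then \<Sum>X\<in>strata n. ct n p c k Y X * v X else 0) else (\<lambda>_. 0))"
  unfolding Mat_def mat_def by simp

lemma hom_Mat: fixes c :: "int \<Rightarrow> stratum \<Rightarrow> stratum \<Rightarrow> 'r::idom" shows "hom n p (Mat n p c)"
proof -
  have out: "Mat n p c k T v \<in> Jmod n (k + p) T" if "v \<in> Jmod n k T" for k T v
  proof (unfold Jmod_iff, intro allI impI)
    fix Y assume nz: "Mat n p c k T v Y \<noteq> 0"
    hence cl: "in_cl n T Y" and s: "(\<Sum>X\<in>strata n. ct n p c k Y X * v X) \<noteq> 0"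
      using that by (auto simp: Mat_apply split: if_splits)
    from s obtain X where "ct n p c k Y X \<noteq> 0" by (metis (mono_tags, lifting) mult_eq_0_iff sum.neutral)
    hence "rel n p k Y X" unfolding ct_def by (auto split: if_splits)
    thus "Y \<in> summJ n (k + p) \<and> in_cl n T Y" using cl unfolding rel_def by auto
  qed
  have add: "(\<lambda>X. v X + w X) \<in> Jmod n k T" if "v \<in> Jmod n k T" "w \<in> Jmod n k T" for v w k T
    using that unfolding Jmod_iff by (metis add.right_neutral add_0)
  have sc: "(\<lambda>X. r * v X) \<in> Jmod n k T" if "v \<in> Jmod n k T" for v r k T
    using that unfolding Jmod_iff by auto
  have rs: "restr n T' v \<in> Jmod n k T'" if "v \<in> Jmod n k T" for v k T T'
    using that unfolding Jmod_iff restr_def by auto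
  show ?thesis unfolding hom_def
  proof (intro allI conjI ballI impI)
    fix k T and v :: "stratum \<Rightarrow> 'r" assume "v \<notin> Jmod n k T" thus "Mat n p c k T v = (\<lambda>_. 0)" by (simp add: Mat_apply)
  next
    fix k T and v :: "stratum \<Rightarrow> 'r" assume "v \<in> Jmod n k T" thus "Mat n p c k T v \<in> Jmod n (k + p) T" by (rule out)
  next
    fix k T and v w :: "stratum \<Rightarrow> 'r" assume "v \<in> Jmod n k T" "w \<in> Jmod n k T"
    thus "Mat n p c k T (\<lambda>X. v X + w X) = (\<lambda>Y. Mat n p c k T v Y + Mat n p c k T w Y)"
      using add by (auto simp: Mat_apply distrib_left sum.distrib)
  next
    fix k T and v :: "stratum \<Rightarrow> 'r" and r assume "v \<in> Jmod n k T"
    thus "Mat n p c k T (\<lambda>X. r * v X) = (\<lambda>Y. r * Mat n p c k T v Y)"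
      using sc by (auto simp: Mat_apply sum_distrib_left mult.left_commute)
  next
    fix k T T' and v :: "stratum \<Rightarrow> 'r" assume ar: "arrow n T T'" and v: "v \<in> Jmod n k T"
    have TT': "in_cl n T T'" using ar unfolding arrow_def by auto
    show "restr n T' (Mat n p c k T v) = Mat n p c k T' (restr n T' v)"
    proof
      fix Y
      show "restr n T' (Mat n p c k T v) Y = Mat n p c k T' (restr n T' v) Y"
      proof (cases "in_cl n T' Y")
        case False thus ?thesis using v rs by (simp add: Mat_apply restr_def)
      next
        case True
        hence TY: "in_cl n T Y" using TT' in_cl_trans by blast
        have "(\<Sum>X\<in>strata n. ct n p c k Y X * v X) = (\<Sum>X\<in>strata n. ct n p c k Y X * restr n T' v X)"
        proof (rule sum.cong[OF refl])
          fix X assume "X \<in> strata n"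
          show "ct n p c k Y X * v X = ct n p c k Y X * restr n T' v X"
          proof (cases "ct n p c k Y X = 0")
            case False
            hence "in_cl n Y X" unfolding ct_def rel_def by (auto split: if_splits)
            hence "in_cl n T' X" using True in_cl_trans by blast
            thus ?thesis by (simp add: restr_def)
          qed simp
        qed
        thus ?thesis using True TY v rs[OF v] by (simp add: Mat_apply restr_def)
      qed
    qed
  qed
qed

lemma hom_zero_vec:
  assumes "hom n p f" shows "f k T (\<lambda>_. 0) = (\<lambda>_. 0)"
proof -
  from assms have "\<forall>v\<in>Jmod n k T. \<forall>r. f k T (\<lambda>X. r * v X) = (\<lambda>Y. r * f k T v Y)"
    unfolding hom_def by blast
  from this[rule_format, OF zero_Jmod, of 0] show ?thesis by simp
qed

lemma hom_out: "hom n p f \<Longrightarrow> v \<in> Jmod n k T \<Longrightarrow> f k T v \<in> Jmod n (k + p) T"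
  unfolding hom_def by blast

lemma hom_outside: "hom n p f \<Longrightarrow> v \<notin> Jmod n k T \<Longrightarrow> f k T v = (\<lambda>_. 0)"
  unfolding hom_def by blast

lemma hom_add: "hom n p f \<Longrightarrow> v \<in> Jmod n k T \<Longrightarrow> w \<in> Jmod n k T \<Longrightarrow>
   f k T (\<lambda>X. v X + w X) = (\<lambda>Y. f k T v Y + f k T w Y)"
  unfolding hom_def by blast

lemma hom_smul: "hom n p f \<Longrightarrow> v \<in> Jmod n k T \<Longrightarrow> f k T (\<lambda>X. r * v X) = (\<lambda>Y. r * f k T v Y)"
  unfolding hom_def by blast

lemma hom_restr: "hom n p f \<Longrightarrow> arrow n T T' \<Longrightarrow> v \<in> Jmod n k T \<Longrightarrow>
   restr n T' (f k T v) = f k T' (restr n T' v)"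
  unfolding hom_def by blast

lemma hom_lin_sum:
  fixes f :: "'r::idom endo"
  assumes h: "hom n p f" and fin: "finite S'"
    and sub: "\<And>X. X \<in> S' \<Longrightarrow> (delta X :: stratum \<Rightarrow> 'r) \<in> Jmod n k Y"
  shows "f k Y (\<lambda>Z. \<Sum>X\<in>S'. a X * delta X Z) = (\<lambda>Z'. \<Sum>X\<in>S'. a X * f k Y (delta X) Z')"
  using fin sub
proof (induction S' rule: finite_induct)
  case empty thus ?case using hom_zero_vec[OF h] by simp
next
  case (insert x F)
  have j1: "(\<lambda>Z. a x * delta x Z) \<in> Jmod n k Y"
    using insert.prems[of x] unfolding Jmod_iff by auto
  have j2: "(\<lambda>Z. \<Sum>X\<in>F. a X * delta X Z) \<in> Jmod n k Y"
    unfolding Jmod_iff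
  proof (intro allI impI)
    fix Z assume "(\<Sum>X\<in>F. a X * delta X Z) \<noteq> (0::'r)"
    then obtain X where X: "X \<in> F" "a X * delta X Z \<noteq> (0::'r)" by (meson sum.neutral)
    hence "delta X Z \<noteq> (0::'r)" by auto
    moreover have "(delta X :: stratum \<Rightarrow> 'r) \<in> Jmod n k Y" using insert.prems X by auto
    ultimately show "Z \<in> summJ n k \<and> in_cl n Y Z" unfolding Jmod_iff by blast
  qed
  have "f k Y (\<lambda>Z. \<Sum>X\<in>insert x F. a X * delta X Z)
      = f k Y (\<lambda>Z. a x * delta x Z + (\<Sum>X\<in>F. a X * delta X Z))"
    using insert.hyps by simp
  also have "\<dots> = (\<lambda>Z'. f k Y (\<lambda>Z. a x * delta x Z) Z' + f k Y (\<lambda>Z. \<Sum>X\<in>F. a X * delta X Z) Z')"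
    using hom_add[OF h j1 j2] .
  also have "f k Y (\<lambda>Z. a x * delta x Z) = (\<lambda>Z'. a x * f k Y (delta x) Z')"
    using hom_smul[OF h, of "delta x" k Y "a x"] insert.prems[of x] by simp
  also have "f k Y (\<lambda>Z. \<Sum>X\<in>F. a X * delta X Z) = (\<lambda>Z'. \<Sum>X\<in>F. a X * f k Y (delta X) Z')"
    using insert.IH insert.prems by simp
  finally show ?case using insert.hyps by simp
qed

lemma hom_repr:
  fixes f :: "'r::idom endo"
  assumes h: "hom n p f"
  shows "f = Mat n p (coef f)"
proof (intro ext)
  fix k T v Y
  show "f k T v Y = Mat n p (coef f) k T v Y"
  proof (cases "v \<in> Jmod n k T")
    case False thus ?thesis using hom_outside[OF h False] by (simp add: Mat_apply)
  next
    case v: True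
    have fo: "f k T v \<in> Jmod n (k + p) T" using hom_out[OF h v] .
    show ?thesis
    proof (cases "in_cl n T Y")
      case False thus ?thesis using fo v unfolding Jmod_iff by (auto simp: Mat_apply)
    next
      case TY: True
      define w where "w = restr n Y v"
      have wJ: "w \<in> Jmod n k Y" using v unfolding w_def Jmod_iff restr_def by auto
      have Ys: "Y \<in> strata n" using in_cl_strata[OF TY] by auto
      have red: "f k T v Y = f k Y w Y"
      proof (cases "T = Y")
        case True
        have "w = v" unfolding w_def restr_def using v True unfolding Jmod_iff by (auto intro!: ext)
        thus ?thesis using True by simp
      next
        case False
        hence ar: "arrow n T Y" using TY unfolding arrow_def by simp
        have "restr n Y (f k T v) Y = f k Y w Y" using hom_restr[OF h ar v] unfolding w_def by simp
        thus ?thesis using Ys by (simp add: restr_def)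
      qed
      define S where "S = {X \<in> strata n. X \<in> summJ n k \<and> in_cl n Y X}"
      have finS: "finite S" unfolding S_def by simp
      have dS: "(delta X :: stratum \<Rightarrow> 'r) \<in> Jmod n k Y" if "X \<in> S" for X
        using that unfolding S_def Jmod_iff delta_def by auto
      have wexp: "w = (\<lambda>Z. \<Sum>X\<in>S. w X * delta X Z)"
      proof
        fix Z
        have "(\<Sum>X\<in>S. w X * delta X Z) = (\<Sum>X\<in>S. if X = Z then w Z else 0)"
          by (rule sum.cong) (auto simp: delta_def)
        also have "\<dots> = (if Z \<in> S then w Z else 0)" using finS by (simp add: sum.delta')
        also have "\<dots> = w Z"
          using wJ in_cl_strata[of n Y Z] unfolding Jmod_iff S_def by auto
        finally show "w Z = (\<Sum>X\<in>S. w X * delta X Z)" by simp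
      qed
      have "f k Y w Y = (\<Sum>X\<in>S. w X * coef f k Y X)"
        using hom_lin_sum[OF h finS dS, of w] wexp unfolding coef_def by metis
      also have "\<dots> = (\<Sum>X\<in>S. ct n p (coef f) k Y X * v X)"
      proof (rule sum.cong[OF refl])
        fix X assume X: "X \<in> S"
        have wX: "w X = v X" using X unfolding S_def w_def restr_def by auto
        show "w X * coef f k Y X = ct n p (coef f) k Y X * v X"
        proof (cases "Y \<in> summJ n (k + p)")
          case True thus ?thesis using X wX unfolding ct_def rel_def S_def by auto
        next
          case False
          have "f k Y (delta X) \<in> Jmod n (k + p) Y" using hom_out[OF h dS[OF X]] .
          hence "coef f k Y X = 0" using False unfolding coef_def Jmod_iff by auto
          thus ?thesis using False unfolding ct_def rel_def by auto
        qed
      qed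
      also have "\<dots> = (\<Sum>X\<in>strata n. ct n p (coef f) k Y X * v X)"
      proof (rule sum.mono_neutral_left)
        show "S \<subseteq> strata n" unfolding S_def by auto
        show "\<forall>i\<in>strata n - S. ct n p (coef f) k Y i * v i = 0"
          unfolding S_def ct_def rel_def by auto
      qed simp
      finally show ?thesis using red v TY by (simp add: Mat_apply)
    qed
  qed
qed

lemma coef_Mat: fixes c :: "int \<Rightarrow> stratum \<Rightarrow> stratum \<Rightarrow> 'r::idom" shows "coef (Mat n p c) = ct n p c"
proof (intro ext)
  fix k Y X
  show "coef (Mat n p c) k Y X = ct n p c k Y X"
  proof (cases "(delta X :: stratum \<Rightarrow> 'r) \<in> Jmod n k Y")
    case False
    hence "\<not> rel n p k Y X" unfolding rel_def Jmod_iff delta_def by (auto split: if_splits)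
    thus ?thesis using False unfolding coef_def ct_def by (simp add: Mat_apply)
  next
    case True
    hence XS': "X \<in> summJ n k" "in_cl n Y X" unfolding Jmod_iff delta_def
      by (metis one_neq_zero)+
    hence XS: "X \<in> strata n" "X \<in> summJ n k" "in_cl n Y X" using summJ_strata by auto
    have "(\<Sum>Z\<in>strata n. ct n p c k Y Z * delta X Z) = ct n p c k Y X"
    proof -
      have "(\<Sum>Z\<in>strata n. ct n p c k Y Z * delta X Z) = (\<Sum>Z\<in>strata n. if Z = X then ct n p c k Y X else 0)"
        by (rule sum.cong) (auto simp: delta_def)
      thus ?thesis using XS by (simp add: sum.delta')
    qed
    thus ?thesis using True XS in_cl_strata[OF XS(3)] unfolding coef_def by (simp add: Mat_apply)
  qed
qed

lemma Mat_eq_iff: "Mat n p c = Mat n p c' \<longleftrightarrow> (\<forall>k Y X. rel n p k Y X \<longrightarrow> c k Y X = c' k Y X)"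
proof
  assume "Mat n p c = Mat n p c'"
  hence "ct n p c = ct n p c'" using coef_Mat by metis
  thus "\<forall>k Y X. rel n p k Y X \<longrightarrow> c k Y X = c' k Y X" unfolding ct_def by metis
next
  assume "\<forall>k Y X. rel n p k Y X \<longrightarrow> c k Y X = c' k Y X"
  hence "ct n p c = ct n p c'" unfolding ct_def by (auto intro!: ext)
  thus "Mat n p c = Mat n p c'" unfolding Mat_def by simp
qed

lemma EndJ_repr: "f \<in> EndJ n p \<Longrightarrow> \<exists>c. f = Mat n p c"
  unfolding EndJ_def using hom_repr by blast

lemma Mat_in_EndJ[simp]: "Mat n p c \<in> EndJ n p"
  unfolding EndJ_def using hom_Mat by blast

definition mprod :: "nat \<Rightarrow> int \<Rightarrow> int \<Rightarrow> (int \<Rightarrow> stratum \<Rightarrow> stratum \<Rightarrow> 'r::idom)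
   \<Rightarrow> (int \<Rightarrow> stratum \<Rightarrow> stratum \<Rightarrow> 'r) \<Rightarrow> int \<Rightarrow> stratum \<Rightarrow> stratum \<Rightarrow> 'r" where
  "mprod n q p c2 c1 = (\<lambda>k Y X. \<Sum>Z\<in>strata n. ct n q c2 (k + p) Y Z * ct n p c1 k Z X)"

lemma ct_nz_rel: "ct n p c k Y X \<noteq> 0 \<Longrightarrow> rel n p k Y X"
  unfolding ct_def by (auto split: if_splits)

lemma ct_mprod: "ct n (p + q) (mprod n q p c2 c1) = mprod n q p c2 c1"
proof (intro ext)
  fix k Y X
  show "ct n (p + q) (mprod n q p c2 c1) k Y X = mprod n q p c2 c1 k Y X"
  proof (cases "mprod n q p c2 c1 k Y X = 0")
    case False
    then obtain Z where "ct n q c2 (k + p) Y Z * ct n p c1 k Z X \<noteq> 0"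
      unfolding mprod_def by (meson sum.neutral)
    hence "rel n q (k + p) Y Z" "rel n p k Z X" using ct_nz_rel by auto
    hence "rel n (p + q) k Y X" unfolding rel_def by (auto simp: add.assoc intro: in_cl_trans)
    thus ?thesis unfolding ct_def by simp
  qed (simp add: ct_def)
qed

lemma compE_Mat:
  fixes c1 c2 :: "int \<Rightarrow> stratum \<Rightarrow> stratum \<Rightarrow> 'r::idom"
  shows "compE p (Mat n q c2) (Mat n p c1) = Mat n (p + q) (mprod n q p c2 c1)"
proof (intro ext)
  fix k T and v :: "stratum \<Rightarrow> 'r" and Y
  show "compE p (Mat n q c2) (Mat n p c1) k T v Y = Mat n (p + q) (mprod n q p c2 c1) k T v Y"
  proof (cases "v \<in> Jmod n k T")
    case False thus ?thesis unfolding compE_def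
      using hom_zero_vec[OF hom_Mat] by (simp add: Mat_apply)
  next
    case v: True
    have uJ: "Mat n p c1 k T v \<in> Jmod n (k + p) T" using hom_out[OF hom_Mat v] .
    show ?thesis
    proof (cases "in_cl n T Y")
      case False thus ?thesis using v uJ unfolding compE_def by (simp add: Mat_apply)
    next
      case TY: True
      have "(\<Sum>Z\<in>strata n. ct n q c2 (k + p) Y Z * Mat n p c1 k T v Z)
          = (\<Sum>Z\<in>strata n. ct n q c2 (k + p) Y Z * (\<Sum>X\<in>strata n. ct n p c1 k Z X * v X))"
      proof (rule sum.cong[OF refl])
        fix Z assume "Z \<in> strata n"
        show "ct n q c2 (k + p) Y Z * Mat n p c1 k T v Z
            = ct n q c2 (k + p) Y Z * (\<Sum>X\<in>strata n. ct n p c1 k Z X * v X)"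
        proof (cases "ct n q c2 (k + p) Y Z = 0")
          case False
          hence "in_cl n Y Z" using ct_nz_rel unfolding rel_def by blast
          hence "in_cl n T Z" using TY in_cl_trans by blast
          thus ?thesis using v by (simp add: Mat_apply)
        qed simp
      qed
      also have "\<dots> = (\<Sum>X\<in>strata n. mprod n q p c2 c1 k Y X * v X)"
        unfolding mprod_def sum_distrib_left sum_distrib_right
        by (subst sum.swap) (simp add: mult.assoc)
      finally show ?thesis using v uJ TY unfolding compE_def by (simp add: Mat_apply ct_mprod)
    qed
  qed
qed

definition cdk :: "nat \<Rightarrow> int \<Rightarrow> stratum \<Rightarrow> stratum \<Rightarrow> 'r::idom" where
  "cdk n k = (if k = -1 then cd0 n else if k = 0 then cd1 n else (\<lambda>_ _. 0))"

lemma cdk_simps[simp]: "cdk n (-1) = cd0 n" "cdk n 0 = cd1 n"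
  "k \<noteq> -1 \<Longrightarrow> k \<noteq> 0 \<Longrightarrow> cdk n k = (\<lambda>_ _. 0)"
  unfolding cdk_def by auto

lemma ct_cdk: "ct n 1 (cdk n :: int \<Rightarrow> stratum \<Rightarrow> stratum \<Rightarrow> 'r::idom) = cdk n"
proof (intro ext)
  fix k Y X
  show "ct n 1 (cdk n) k Y X = (cdk n k Y X :: 'r)"
  proof (cases "cdk n k Y X = (0::'r)")
    case False
    have "rel n 1 k Y X"
    proof (cases "k = -1")
      case True
      with False show ?thesis unfolding rel_def
        by (cases Y; cases X) (auto split: if_splits)
    next
      case k: False
      show ?thesis
      proof (cases "k = 0")
        case True
        with False show ?thesis unfolding rel_def
          by (cases Y; cases X) (auto split: if_splits simp: succc_range)
      next
        case False
        with k \<open>cdk n k Y X \<noteq> 0\<close> show ?thesis by simp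
      qed
    qed
    thus ?thesis unfolding ct_def by simp
  next
    case True thus ?thesis unfolding ct_def by (simp del: cdk_simps)
  qed
qed

lemma dJ_Mat: "(\<lambda>k. dJ n k) = Mat n 1 (cdk n)"
proof (intro ext)
  fix k T v Y
  show "dJ n k T v Y = Mat n 1 (cdk n) k T v Y"
    unfolding dJ_def Mat_apply ct_cdk canmap_def by (simp add: cdk_def)
qed

lemma addE_Mat: "addE (Mat n p a) (Mat n p b) = Mat n p (\<lambda>k Y X. a k Y X + b k Y X)"
  unfolding addE_def by (intro ext) (auto simp: Mat_apply ct_def sum.distrib[symmetric] distrib_right intro!: sum.cong)

lemma subE_Mat: "subE (Mat n p a) (Mat n p b) = Mat n p (\<lambda>k Y X. a k Y X - b k Y X)"
  unfolding subE_def by (intro ext) (auto simp: Mat_apply ct_def sum_subtractf[symmetric] left_diff_distrib intro!: sum.cong)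

lemma smulE_Mat: "smulE r (Mat n p a) = Mat n p (\<lambda>k Y X. r * a k Y X)"
  unfolding smulE_def by (intro ext) (auto simp: Mat_apply ct_def sum_distrib_left intro!: sum.cong)

lemma zeroE_Mat: "zeroE = Mat n p (\<lambda>_ _ _. 0)"
  unfolding zeroE_def by (intro ext) (simp add: Mat_apply ct_def)

lemma idE_Mat: "idE n = Mat n 0 (\<lambda>k Y X. if Y = X then 1 else 0)"
proof (intro ext)
  fix k T v Y
  show "idE n k T v Y = Mat n 0 (\<lambda>k Y X. if Y = X then 1 else 0) k T v Y"
  proof (cases "v \<in> Jmod n k T")
    case True
    have "(\<Sum>X\<in>strata n. ct n 0 (\<lambda>k Y X. if Y = X then 1 else 0) k Y X * v X)
         = (\<Sum>X\<in>strata n. if X = Y then (if Y \<in> summJ n k then v Y else 0) else 0)"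
      by (rule sum.cong) (auto simp: ct_def rel_def dest: summJ_strata)
    also have "\<dots> = (if Y \<in> strata n \<and> Y \<in> summJ n k then v Y else 0)"
      by (simp add: sum.delta)
    finally have "Mat n 0 (\<lambda>k Y X. if Y = X then 1 else 0) k T v Y = (if in_cl n T Y then (if Y \<in> strata n \<and> Y \<in> summJ n k then v Y else 0) else 0)"
      using True by (simp add: Mat_apply)
    moreover have "idE n k T v Y = v Y" using True by (simp add: idE_def)
    moreover have "v Y \<noteq> 0 \<Longrightarrow> in_cl n T Y \<and> Y \<in> strata n \<and> Y \<in> summJ n k"
      using True unfolding Jmod_iff by (auto dest: in_cl_strata)
    ultimately show ?thesis by auto
  qed (simp add: idE_def Mat_apply)
qed

definition eps :: "int \<Rightarrow> 'r::idom" where "eps p = (if even p then 1 else -1)"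

lemma dEnd_Mat:
  fixes c :: "int \<Rightarrow> stratum \<Rightarrow> stratum \<Rightarrow> 'r::idom"
  shows "dEnd n p (Mat n p c) = Mat n (p + 1)
     (\<lambda>k Y X. mprod n 1 p (cdk n) c k Y X - eps p * mprod n p 1 c (cdk n) k Y X)"
proof -
  have "dEnd n p (Mat n p c) = subE (compE p (\<lambda>k. dJ n k) (Mat n p c))
        (smulE (eps p) (compE 1 (Mat n p c) (\<lambda>k. dJ n k)))"
    unfolding dEnd_def subE_def smulE_def compE_def eps_def by simp
  also have "\<dots> = subE (Mat n (p + 1) (mprod n 1 p (cdk n) c))
        (smulE (eps p) (Mat n (p + 1) (mprod n p 1 c (cdk n))))"
    unfolding dJ_Mat compE_Mat by (simp add: add.commute)
  finally show ?thesis by (simp add: smulE_Mat subE_Mat)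
qed

lemma rel_cases:
  "rel n p k Y X \<longleftrightarrow>
    (\<exists>j. (j = 1 \<or> j = 2) \<and> p = 0 \<and> k = -1 \<and> Y = H j \<and> X = H j) \<or>
    (\<exists>i j. 1 \<le> i \<and> i \<le> n \<and> (j = 1 \<or> j = 2) \<and> p = 1 \<and> k = -1 \<and> Y = E i \<and> X = H j) \<or>
    (\<exists>i j. 1 \<le> i \<and> i \<le> n \<and> (j = 1 \<or> j = 2) \<and> (p = 1 \<or> p = 2) \<and> k = -1 \<and> Y = P i \<and> X = H j) \<or>
    (\<exists>i. 1 \<le> i \<and> i \<le> n \<and> p = 0 \<and> k = 0 \<and> Y = E i \<and> X = E i) \<or>
    (\<exists>i. 1 \<le> i \<and> i \<le> n \<and> (p = 0 \<or> p = 1) \<and> k = 0 \<and> Y = P i \<and> (X = E i \<or> X = E (succc n i) \<or> X = P i)) \<or>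
    (\<exists>i. 1 \<le> i \<and> i \<le> n \<and> (p = -1 \<or> p = 0) \<and> k = 1 \<and> Y = P i \<and> X = P i)"
  unfolding rel_def by (cases Y; cases X) auto

lemma sum_up_P:
  assumes n: "2 \<le> n" and a: "1 \<le> a" "a \<le> n"
    and F: "\<And>Z. \<not> in_cl n (P a) Z \<Longrightarrow> F Z = 0"
  shows "(\<Sum>Z\<in>strata n. F Z) = F (P a) + F (E a) + F (E (succc n a)) + F (H 1) + F (H 2)"
proof -
  have "(\<Sum>Z\<in>strata n. F Z) = (\<Sum>Z\<in>{P a, E a, E (succc n a), H 1, H 2}. F Z)"
  proof (rule sum.mono_neutral_right)
    show "{P a, E a, E (succc n a), H 1, H 2} \<subseteq> strata n" using a by auto
    show "\<forall>i\<in>strata n - {P a, E a, E (succc n a), H 1, H 2}. F i = 0"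
    proof
      fix Z assume "Z \<in> strata n - {P a, E a, E (succc n a), H 1, H 2}"
      hence "\<not> in_cl n (P a) Z" by (cases Z) auto
      thus "F Z = 0" by (rule F)
    qed
  qed simp
  also have "\<dots> = F (P a) + F (E a) + F (E (succc n a)) + F (H 1) + F (H 2)"
    using succc_neq[OF n a] by (simp add: add.assoc)
  finally show ?thesis .
qed

lemma sum_up_E:
  assumes a: "1 \<le> a" "a \<le> n"
    and F: "\<And>Z. \<not> in_cl n (E a) Z \<Longrightarrow> F Z = 0"
  shows "(\<Sum>Z\<in>strata n. F Z) = F (E a) + F (H 1) + F (H 2)"
proof -
  have "(\<Sum>Z\<in>strata n. F Z) = (\<Sum>Z\<in>{E a, H 1, H 2}. F Z)"
  proof (rule sum.mono_neutral_right)
    show "{E a, H 1, H 2} \<subseteq> strata n" using a by auto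
    show "\<forall>i\<in>strata n - {E a, H 1, H 2}. F i = 0"
    proof
      fix Z assume "Z \<in> strata n - {E a, H 1, H 2}"
      hence "\<not> in_cl n (E a) Z" by (cases Z) auto
      thus "F Z = 0" by (rule F)
    qed
  qed simp
  also have "\<dots> = F (E a) + F (H 1) + F (H 2)" by (simp add: add.assoc)
  finally show ?thesis .
qed

lemma sum_up_H:
  assumes F: "\<And>Z. \<not> in_cl n (H j) Z \<Longrightarrow> F Z = 0"
  shows "(\<Sum>Z\<in>strata n. F Z) = (if j = 1 \<or> j = 2 then F (H j) else 0)"
proof (cases "j = 1 \<or> j = 2")
  case True
  have "(\<Sum>Z\<in>strata n. F Z) = (\<Sum>Z\<in>{H j}. F Z)"
  proof (rule sum.mono_neutral_right)
    show "{H j} \<subseteq> strata n" using True by auto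
    show "\<forall>i\<in>strata n - {H j}. F i = 0"
    proof
      fix Z assume "Z \<in> strata n - {H j}"
      hence "\<not> in_cl n (H j) Z" by (cases Z) auto
      thus "F Z = 0" by (rule F)
    qed
  qed simp
  thus ?thesis using True by simp
next
  case False
  hence "\<And>Z. \<not> in_cl n (H j) Z" by (metis in_cl_strata H_strata in_cl_HH in_cl_HE in_cl_HP stratum.exhaust)
  thus ?thesis using F False by simp
qed

lemma ct_in_cl: "\<not> in_cl n Y Z \<Longrightarrow> ct n q c k Y Z = 0"
  unfolding ct_def rel_def by auto

lemma mprod_P: "2 \<le> n \<Longrightarrow> 1 \<le> a \<Longrightarrow> a \<le> n \<Longrightarrow> mprod n q p c2 c1 k (P a) X =
   ct n q c2 (k + p) (P a) (P a) * ct n p c1 k (P a) X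
 + ct n q c2 (k + p) (P a) (E a) * ct n p c1 k (E a) X
 + ct n q c2 (k + p) (P a) (E (succc n a)) * ct n p c1 k (E (succc n a)) X
 + ct n q c2 (k + p) (P a) (H 1) * ct n p c1 k (H 1) X
 + ct n q c2 (k + p) (P a) (H 2) * ct n p c1 k (H 2) X"
  unfolding mprod_def by (rule sum_up_P) (auto simp: ct_in_cl)

lemma mprod_E: "1 \<le> a \<Longrightarrow> a \<le> n \<Longrightarrow> mprod n q p c2 c1 k (E a) X =
   ct n q c2 (k + p) (E a) (E a) * ct n p c1 k (E a) X
 + ct n q c2 (k + p) (E a) (H 1) * ct n p c1 k (H 1) X
 + ct n q c2 (k + p) (E a) (H 2) * ct n p c1 k (H 2) X"
  unfolding mprod_def by (rule sum_up_E) (auto simp: ct_in_cl)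

lemma mprod_H: "j = 1 \<or> j = 2 \<Longrightarrow> mprod n q p c2 c1 k (H j) X =
   ct n q c2 (k + p) (H j) (H j) * ct n p c1 k (H j) X"
proof -
  assume j: "j = 1 \<or> j = 2"
  have "(\<Sum>Z\<in>strata n. ct n q c2 (k + p) (H j) Z * ct n p c1 k Z X)
     = (if j = 1 \<or> j = 2 then ct n q c2 (k + p) (H j) (H j) * ct n p c1 k (H j) X else 0)"
    by (rule sum_up_H[of n j "\<lambda>Z. ct n q c2 (k + p) (H j) Z * ct n p c1 k Z X"]) (simp add: ct_in_cl)
  thus ?thesis using j unfolding mprod_def by simp
qed

lemma Mat_zero_deg: "p \<noteq> -1 \<Longrightarrow> p \<noteq> 0 \<Longrightarrow> p \<noteq> 1 \<Longrightarrow> p \<noteq> 2 \<Longrightarrow> Mat n p c = zeroE"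
  unfolding zeroE_Mat[of n p] Mat_eq_iff rel_cases by auto

definition arrA :: "(nat \<Rightarrow> 'r::idom) \<Rightarrow> 'r \<Rightarrow> 'r \<Rightarrow> int \<Rightarrow> stratum \<Rightarrow> stratum \<Rightarrow> 'r" where
  "arrA r s t k Y X = (if Y = X then (if k = 0 then (case Y of P i \<Rightarrow> r i | _ \<Rightarrow> s) else s)
       + (if k = -1 \<and> Y = H 1 then t else 0) else 0)"

definition arrB :: "(nat \<Rightarrow> 'r::idom) \<Rightarrow> (nat \<Rightarrow> 'r) \<Rightarrow> (nat \<Rightarrow> 'r) \<Rightarrow> int \<Rightarrow> stratum \<Rightarrow> stratum \<Rightarrow> 'r" where
  "arrB r u w k Y X = (if k = 0 then (case Y of P i \<Rightarrow> if X = P i then r i else 0 | _ \<Rightarrow> 0)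
       else if k = -1 \<and> X = H 1 then (case Y of P i \<Rightarrow> u i | E i \<Rightarrow> w i | _ \<Rightarrow> 0) else 0)"

definition arrC :: "(nat \<Rightarrow> 'r::idom) \<Rightarrow> int \<Rightarrow> stratum \<Rightarrow> stratum \<Rightarrow> 'r" where
  "arrC c k Y X = (if k = -1 \<and> X = H 1 then (case Y of P i \<Rightarrow> c i | _ \<Rightarrow> 0) else 0)"

lemmas ct_simps = ct_def rel_def

lemma compAA: "2 \<le> n \<Longrightarrow> compE 0 (Mat n 0 (arrA r s t)) (Mat n 0 (arrA r' s' t'))
   = Mat n 0 (arrA (\<lambda>i. r i * r' i) (s * s') (s * t' + t * s' + t * t'))"
  apply (simp only: compE_Mat add_0_left add_0_right Mat_eq_iff)
  apply (intro allI impI)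
  apply (subst (asm) rel_cases)
  apply (elim disjE exE conjE)
  apply (simp_all add: mprod_P mprod_E mprod_H ct_def rel_def arrA_def algebra_simps)
  done

lemma dA: "2 \<le> n \<Longrightarrow> dEnd n 0 (Mat n 0 (arrA r s t)) = Mat n 1 (arrB (\<lambda>_. 0) (\<lambda>_. 0) (\<lambda>_. t))"
  apply (simp only: dEnd_Mat add_0_left add_0_right Mat_eq_iff)
  apply (intro allI impI)
  apply (subst (asm) rel_cases)
  apply (elim disjE exE conjE)
  apply (simp_all add: mprod_P mprod_E mprod_H ct_def rel_def arrA_def arrB_def eps_def algebra_simps)
  done

lemma compBA: "2 \<le> n \<Longrightarrow> compE 0 (Mat n 1 (arrB r u w)) (Mat n 0 (arrA r' s' t'))
   = Mat n 1 (arrB (\<lambda>i. r i * r' i) (\<lambda>i. u i * (s' + t')) (\<lambda>i. w i * (s' + t')))"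
  apply (simp only: compE_Mat add_0_left add_0_right Mat_eq_iff)
  apply (intro allI impI, subst (asm) rel_cases, elim disjE exE conjE)
  by (simp_all add: mprod_P mprod_E mprod_H ct_def rel_def arrA_def arrB_def arrC_def eps_def algebra_simps)

lemma compAB: "2 \<le> n \<Longrightarrow> compE 1 (Mat n 0 (arrA r s t)) (Mat n 1 (arrB r' u' w'))
   = Mat n 1 (arrB (\<lambda>i. s * r' i) (\<lambda>i. r i * u' i) (\<lambda>i. s * w' i))"
  apply (simp only: compE_Mat add_0_left add_0_right Mat_eq_iff)
  apply (intro allI impI, subst (asm) rel_cases, elim disjE exE conjE)
  by (simp_all add: mprod_P mprod_E mprod_H ct_def rel_def arrA_def arrB_def arrC_def eps_def algebra_simps)

lemma compCA: "2 \<le> n \<Longrightarrow> compE 0 (Mat n 2 (arrC c)) (Mat n 0 (arrA r' s' t'))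
   = Mat n 2 (arrC (\<lambda>i. c i * (s' + t')))"
  apply (simp only: compE_Mat add_0_left add_0_right Mat_eq_iff)
  apply (intro allI impI, subst (asm) rel_cases, elim disjE exE conjE)
  by (simp_all add: mprod_P mprod_E mprod_H ct_def rel_def arrA_def arrB_def arrC_def eps_def algebra_simps)

lemma compAC: "2 \<le> n \<Longrightarrow> compE 2 (Mat n 0 (arrA r s t)) (Mat n 2 (arrC c))
   = Mat n 2 (arrC (\<lambda>i. s * c i))"
  apply (simp only: compE_Mat add_0_left add_0_right Mat_eq_iff)
  apply (intro allI impI, subst (asm) rel_cases, elim disjE exE conjE)
  by (simp_all add: mprod_P mprod_E mprod_H ct_def rel_def arrA_def arrB_def arrC_def eps_def algebra_simps)

lemma compBB: "2 \<le> n \<Longrightarrow> compE 1 (Mat n 1 (arrB r u w)) (Mat n 1 (arrB r' u' w'))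
   = Mat n 2 (arrC (\<lambda>i. r i * u' i))"
  apply (simp only: compE_Mat one_add_one Mat_eq_iff)
  apply (intro allI impI, subst (asm) rel_cases, elim disjE exE conjE)
  by (simp_all add: mprod_P mprod_E mprod_H ct_def rel_def arrA_def arrB_def arrC_def eps_def algebra_simps)

lemma dB: "2 \<le> n \<Longrightarrow> dEnd n 1 (Mat n 1 (arrB r u w)) = Mat n 2 (arrC (\<lambda>i. w i - w (succc n i)))"
  apply (simp only: dEnd_Mat one_add_one Mat_eq_iff)
  apply (intro allI impI, subst (asm) rel_cases, elim disjE exE conjE)
  by (simp_all add: mprod_P mprod_E mprod_H ct_def rel_def arrA_def arrB_def arrC_def eps_def algebra_simps)

lemma dC: "dEnd n 2 (Mat n 2 c) = zeroE"
  unfolding dEnd_Mat by (rule Mat_zero_deg) auto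

lemma comp_high: "p + q \<noteq> -1 \<Longrightarrow> p + q \<noteq> 0 \<Longrightarrow> p + q \<noteq> 1 \<Longrightarrow> p + q \<noteq> 2 \<Longrightarrow>
   compE p (Mat n q c2) (Mat n p c1) = zeroE"
  unfolding compE_Mat by (rule Mat_zero_deg) auto

lemma idE_A: "idE n = Mat n 0 (arrA (\<lambda>_. 1) 1 0)"
  unfolding idE_Mat Mat_eq_iff apply (intro allI impI, subst (asm) rel_cases, elim disjE exE conjE)
  by (simp_all add: mprod_P mprod_E mprod_H ct_def rel_def arrA_def arrB_def arrC_def eps_def algebra_simps)

lemma addA: "addE (Mat n 0 (arrA r s t)) (Mat n 0 (arrA r' s' t')) = Mat n 0 (arrA (\<lambda>i. r i + r' i) (s + s') (t + t'))"
  unfolding addE_Mat Mat_eq_iff apply (intro allI impI, subst (asm) rel_cases, elim disjE exE conjE)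
  by (simp_all add: mprod_P mprod_E mprod_H ct_def rel_def arrA_def arrB_def arrC_def eps_def algebra_simps)
lemma addB: "addE (Mat n 1 (arrB r u w)) (Mat n 1 (arrB r' u' w')) = Mat n 1 (arrB (\<lambda>i. r i + r' i) (\<lambda>i. u i + u' i) (\<lambda>i. w i + w' i))"
  unfolding addE_Mat Mat_eq_iff apply (intro allI impI, subst (asm) rel_cases, elim disjE exE conjE)
  by (simp_all add: mprod_P mprod_E mprod_H ct_def rel_def arrA_def arrB_def arrC_def eps_def algebra_simps)
lemma addC: "addE (Mat n 2 (arrC c)) (Mat n 2 (arrC c')) = Mat n 2 (arrC (\<lambda>i. c i + c' i))"
  unfolding addE_Mat Mat_eq_iff apply (intro allI impI, subst (asm) rel_cases, elim disjE exE conjE)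
  by (simp_all add: mprod_P mprod_E mprod_H ct_def rel_def arrA_def arrB_def arrC_def eps_def algebra_simps)
lemma smulA: "smulE a (Mat n 0 (arrA r s t)) = Mat n 0 (arrA (\<lambda>i. a * r i) (a * s) (a * t))"
  unfolding smulE_Mat Mat_eq_iff apply (intro allI impI, subst (asm) rel_cases, elim disjE exE conjE)
  by (simp_all add: mprod_P mprod_E mprod_H ct_def rel_def arrA_def arrB_def arrC_def eps_def algebra_simps)
lemma smulB: "smulE a (Mat n 1 (arrB r u w)) = Mat n 1 (arrB (\<lambda>i. a * r i) (\<lambda>i. a * u i) (\<lambda>i. a * w i))"
  unfolding smulE_Mat Mat_eq_iff apply (intro allI impI, subst (asm) rel_cases, elim disjE exE conjE)
  by (simp_all add: mprod_P mprod_E mprod_H ct_def rel_def arrA_def arrB_def arrC_def eps_def algebra_simps)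
lemma smulC: "smulE a (Mat n 2 (arrC c)) = Mat n 2 (arrC (\<lambda>i. a * c i))"
  unfolding smulE_Mat Mat_eq_iff apply (intro allI impI, subst (asm) rel_cases, elim disjE exE conjE)
  by (simp_all add: mprod_P mprod_E mprod_H ct_def rel_def arrA_def arrB_def arrC_def eps_def algebra_simps)
lemma subB: "subE (Mat n 1 (arrB r u w)) (Mat n 1 (arrB r' u' w')) = Mat n 1 (arrB (\<lambda>i. r i - r' i) (\<lambda>i. u i - u' i) (\<lambda>i. w i - w' i))"
  unfolding subE_Mat Mat_eq_iff apply (intro allI impI, subst (asm) rel_cases, elim disjE exE conjE)
  by (simp_all add: mprod_P mprod_E mprod_H ct_def rel_def arrA_def arrB_def arrC_def eps_def algebra_simps)
lemma zeroA: "zeroE = Mat n 0 (arrA (\<lambda>_. 0) 0 0)"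
  unfolding zeroE_Mat[of n 0] Mat_eq_iff apply (intro allI impI, subst (asm) rel_cases, elim disjE exE conjE)
  by (simp_all add: mprod_P mprod_E mprod_H ct_def rel_def arrA_def arrB_def arrC_def eps_def algebra_simps)
lemma zeroB: "zeroE = Mat n 1 (arrB (\<lambda>_. 0) (\<lambda>_. 0) (\<lambda>_. 0))"
  unfolding zeroE_Mat[of n 1] Mat_eq_iff apply (intro allI impI, subst (asm) rel_cases, elim disjE exE conjE)
  by (simp_all add: mprod_P mprod_E mprod_H ct_def rel_def arrA_def arrB_def arrC_def eps_def algebra_simps)
lemma zeroC: "zeroE = Mat n 2 (arrC (\<lambda>_. 0))"
  unfolding zeroE_Mat[of n 2] Mat_eq_iff apply (intro allI impI, subst (asm) rel_cases, elim disjE exE conjE)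
  by (simp_all add: mprod_P mprod_E mprod_H ct_def rel_def arrA_def arrB_def arrC_def eps_def algebra_simps)

lemma eqA: "Mat n 0 (arrA r s t) = Mat n 0 (arrA r' s' t') \<Longrightarrow>
   (\<forall>i. 1 \<le> i \<and> i \<le> n \<longrightarrow> r i = r' i) \<and> s = s' \<and> t = t'"
proof -
  assume "Mat n 0 (arrA r s t) = Mat n 0 (arrA r' s' t')"
  hence e: "\<And>k Y X. rel n 0 k Y X \<Longrightarrow> arrA r s t k Y X = arrA r' s' t' k Y X"
    unfolding Mat_eq_iff by blast
  have "\<And>i. 1 \<le> i \<and> i \<le> n \<longrightarrow> r i = r' i" using e[of 0 "P _" "P _"] by (simp add: rel_def arrA_def)
  moreover have "s = s'" using e[of "-1" "H 2" "H 2"] by (simp add: rel_def arrA_def)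
  moreover have "s + t = s' + t'" using e[of "-1" "H 1" "H 1"] by (simp add: rel_def arrA_def)
  ultimately show ?thesis by auto
qed

lemma eqB: "Mat n 1 (arrB r u w) = Mat n 1 (arrB r' u' w') \<Longrightarrow> 1 \<le> i \<Longrightarrow> i \<le> n \<Longrightarrow>
   r i = r' i \<and> u i = u' i \<and> w i = w' i"
proof -
  assume "Mat n 1 (arrB r u w) = Mat n 1 (arrB r' u' w')" "1 \<le> i" "i \<le> n"
  moreover hence e: "\<And>k Y X. rel n 1 k Y X \<Longrightarrow> arrB r u w k Y X = arrB r' u' w' k Y X"
    unfolding Mat_eq_iff by blast
  ultimately show ?thesis
    using e[of 0 "P i" "P i"] e[of "-1" "P i" "H 1"] e[of "-1" "E i" "H 1"] by (simp add: rel_def arrB_def)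
qed

lemma eqC: "Mat n 2 (arrC c) = Mat n 2 (arrC c') \<Longrightarrow> 1 \<le> i \<Longrightarrow> i \<le> n \<Longrightarrow> c i = c' i"
proof -
  assume "Mat n 2 (arrC c) = Mat n 2 (arrC c')" "1 \<le> i" "i \<le> n"
  moreover hence e: "\<And>k Y X. rel n 2 k Y X \<Longrightarrow> arrC c k Y X = arrC c' k Y X"
    unfolding Mat_eq_iff by blast
  ultimately show ?thesis using e[of "-1" "P i" "H 1"] by (simp add: rel_def arrC_def)
qed

lemma congB: "(\<And>i. 1 \<le> i \<Longrightarrow> i \<le> n \<Longrightarrow> r i = r' i \<and> u i = u' i \<and> w i = w' i) \<Longrightarrow>
   Mat n 1 (arrB r u w) = Mat n 1 (arrB r' u' w')"
  unfolding Mat_eq_iff apply (intro allI impI, subst (asm) rel_cases, elim disjE exE conjE)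
  by (simp_all add: mprod_P mprod_E mprod_H ct_def rel_def arrA_def arrB_def arrC_def eps_def algebra_simps)

lemma congC: "(\<And>i. 1 \<le> i \<Longrightarrow> i \<le> n \<Longrightarrow> c i = c' i) \<Longrightarrow> Mat n 2 (arrC c) = Mat n 2 (arrC c')"
  unfolding Mat_eq_iff apply (intro allI impI, subst (asm) rel_cases, elim disjE exE conjE)
  by (simp_all add: mprod_P mprod_E mprod_H ct_def rel_def arrA_def arrB_def arrC_def eps_def algebra_simps)

lemma comp_zero_left: "compE p zeroE f = zeroE"
  unfolding compE_def zeroE_def by simp

lemma comp_zero_right: assumes "hom n q g" shows "compE p g zeroE = zeroE"
  unfolding compE_def zeroE_def by (intro ext) (simp add: hom_zero_vec[OF assms])

lemma dEnd_zero: "dEnd n p zeroE = zeroE"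
proof -
  have "dEnd n p zeroE = dEnd n p (Mat n p (\<lambda>_ _ _. 0))" by (simp add: zeroE_Mat[symmetric])
  also have "\<dots> = Mat n (p + 1) (\<lambda>_ _ _. 0)"
    unfolding dEnd_Mat Mat_eq_iff by (simp add: mprod_def ct_def)
  finally show ?thesis by (simp add: zeroE_Mat[symmetric])
qed

lemma zero_EndJ[simp]: "zeroE \<in> EndJ n p"
  using Mat_in_EndJ zeroE_Mat by metis

definition UU :: "nat \<Rightarrow> int \<Rightarrow> 'r::idom endo set" where
  "UU n p = (if p = 0 then {Mat n 0 (arrA r s t) | r s t. True}
     else if p = 1 then {Mat n 1 (arrB r u w) | r u w. True}
     else if p = 2 then {Mat n 2 (arrC c) | c. True} else {zeroE})"

definition II :: "nat \<Rightarrow> int \<Rightarrow> 'r::idom endo set" where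
  "II n p = (if p = 1 then {Mat n 1 (arrB (\<lambda>_. 0) (\<lambda>_. 0) w) | w. w n = 0}
     else if p = 2 then {Mat n 2 (arrC c) | c. (\<Sum>i=1..n. c i) = 0} else {zeroE})"

definition VV :: "nat \<Rightarrow> int \<Rightarrow> 'r::idom endo set" where
  "VV n p = (if p = 0 then {Mat n 0 (arrA r s 0) | r s. True}
     else if p = 1 then {Mat n 1 (arrB r u w) | r u w. w n = 0}
     else if p = 2 then {Mat n 2 (arrC c) | c. True} else {zeroE})"

lemma zero_UU: "(zeroE::'a::idom endo) \<in> UU n p"
proof -
  have "\<exists>r s t. (zeroE::'a::idom endo) = Mat n 0 (arrA r s t)" using zeroA by blast
  moreover have "\<exists>r u w. (zeroE::'a::idom endo) = Mat n 1 (arrB r u w)" using zeroB by blast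
  moreover have "\<exists>c. (zeroE::'a::idom endo) = Mat n 2 (arrC c)" using zeroC by blast
  ultimately show ?thesis unfolding UU_def by auto
qed

lemma zero_II: "(zeroE::'a::idom endo) \<in> II n p"
proof -
  have "\<exists>w. (zeroE::'a::idom endo) = Mat n 1 (arrB (\<lambda>_. 0) (\<lambda>_. 0) w) \<and> w n = 0" using zeroB by blast
  moreover have "\<exists>c. (zeroE::'a::idom endo) = Mat n 2 (arrC c) \<and> (\<Sum>i=1..n. c i) = 0" using zeroC by fastforce
  ultimately show ?thesis unfolding II_def by auto
qed

lemma zero_VV: "(zeroE::'a::idom endo) \<in> VV n p"
proof -
  have "\<exists>r s. (zeroE::'a::idom endo) = Mat n 0 (arrA r s 0)" using zeroA by blast
  moreover have "\<exists>r u w. (zeroE::'a::idom endo) = Mat n 1 (arrB r u w) \<and> w n = 0" using zeroB by fastforce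
  moreover have "\<exists>c. (zeroE::'a::idom endo) = Mat n 2 (arrC c)" using zeroC by blast
  ultimately show ?thesis unfolding VV_def by auto
qed

lemma UU_EndJ: "UU n p \<subseteq> EndJ n p"
  unfolding UU_def by auto

lemma II_UU: "II n p \<subseteq> UU n p"
proof (cases "p = 1 \<or> p = 2")
  case True thus ?thesis unfolding II_def UU_def by auto
next
  case False thus ?thesis using zero_UU[of n p] unfolding II_def by auto
qed

lemma VV_UU: "VV n p \<subseteq> UU n p"
  unfolding VV_def UU_def by auto

lemma II_VV: "II n p \<subseteq> VV n p"
proof (cases "p = 1 \<or> p = 2")
  case True thus ?thesis unfolding II_def VV_def by auto
next
  case False thus ?thesis using zero_VV[of n p] unfolding II_def by auto
qed

lemma hom_UU: "f \<in> UU n p \<Longrightarrow> hom n p f"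
  using UU_EndJ unfolding EndJ_def by blast

lemma UU_other: "p \<noteq> 0 \<Longrightarrow> p \<noteq> 1 \<Longrightarrow> p \<noteq> 2 \<Longrightarrow> UU n p = {zeroE}"
  unfolding UU_def by auto

lemma UU_E:
  assumes "f \<in> UU n p"
  obtains (A) r s t where "p = 0" "f = Mat n 0 (arrA r s t)"
    | (B) r u w where "p = 1" "f = Mat n 1 (arrB r u w)"
    | (C) c where "p = 2" "f = Mat n 2 (arrC c)"
    | (Z) "p \<noteq> 0" "p \<noteq> 1" "p \<noteq> 2" "f = zeroE"
  using assms unfolding UU_def by (auto split: if_splits)

lemma UU_I[simp]: "Mat n 0 (arrA r s t) \<in> UU n 0" "Mat n 1 (arrB r u w) \<in> UU n 1"
  "Mat n 2 (arrC c) \<in> UU n 2"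
  unfolding UU_def by auto

lemma addE_zero[simp]: "addE zeroE zeroE = zeroE" and smulE_zero[simp]: "smulE r zeroE = zeroE"
  unfolding addE_def smulE_def zeroE_def by auto

lemma U_subalg:
  assumes n: "2 \<le> n"
  shows "dg_subalg n (UU n :: int \<Rightarrow> 'r::idom endo set) (EndJ n)"
  unfolding dg_subalg_def
proof (intro conjI allI)
  show "idE n \<in> UU n 0" by (subst idE_A) (rule UU_I)
next
  fix p
  show "(UU n p :: 'r endo set) \<subseteq> EndJ n p" by (rule UU_EndJ)
  show "submod (UU n p :: 'r endo set)" unfolding submod_def
  proof (intro conjI ballI allI)
    show "zeroE \<in> UU n p" by (rule zero_UU)
  next
    fix f g :: "'r endo" assume f: "f \<in> UU n p" and g: "g \<in> UU n p"
    show "addE f g \<in> UU n p"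
      using f g by (cases rule: UU_E[OF f]; cases rule: UU_E[OF g]) (auto simp: addA addB addC zero_UU)
  next
    fix r and f :: "'r endo" assume f: "f \<in> UU n p"
    show "smulE r f \<in> UU n p"
      using f by (cases rule: UU_E[OF f]) (auto simp: smulA smulB smulC zero_UU)
  qed
  show "dEnd n p ` UU n p \<subseteq> (UU n (p + 1) :: 'r endo set)"
  proof
    fix x :: "'r endo" assume "x \<in> dEnd n p ` UU n p"
    then obtain f where f: "f \<in> UU n p" and x: "x = dEnd n p f" by blast
    show "x \<in> UU n (p + 1)"
      using f x by (cases rule: UU_E[OF f]) (auto simp: dA[OF n] dB[OF n] dC dEnd_zero zero_UU)
  qed
  show "\<forall>f\<in>UU n p. \<forall>g\<in>UU n q. compE p g f \<in> (UU n (p + q) :: 'r endo set)" for q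
  proof (intro allI ballI)
    fix f g :: "'r endo" assume f: "f \<in> UU n p" and g: "g \<in> UU n q"
    show "compE p g f \<in> UU n (p + q)"
      using f
    proof (cases rule: UU_E)
      case Z thus ?thesis using hom_UU[OF g] by (simp add: comp_zero_right zero_UU)
    next
      case fA: (A r s t)
      show ?thesis using g fA
        by (cases rule: UU_E[OF g]) (auto simp: compAA[OF n] compBA[OF n] compCA[OF n] comp_zero_left zero_UU)
    next
      case fB: (B r u w)
      show ?thesis using g fB
        by (cases rule: UU_E[OF g]) (auto simp: compAB[OF n] compBB[OF n] comp_high comp_zero_left zero_UU)
    next
      case fC: (C c)
      show ?thesis using g fC
        by (cases rule: UU_E[OF g]) (auto simp: compAC[OF n] comp_high comp_zero_left zero_UU)
    qed
  qed
qed

lemma succc_bij: "1 \<le> n \<Longrightarrow> bij_betw (succc n) {1..n} {1..n}"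
proof (rule bij_betw_imageI)
  show "inj_on (succc n) {1..n}" unfolding inj_on_def succc_def by auto
  assume n: "1 \<le> n"
  show "succc n ` {1..n} = {1..n}"
  proof
    show "succc n ` {1..n} \<subseteq> {1..n}" using succc_range by fastforce
    show "{1..n} \<subseteq> succc n ` {1..n}"
    proof
      fix j assume j: "j \<in> {1..n}"
      show "j \<in> succc n ` {1..n}"
      proof (cases "j = 1")
        case True
        hence "j = succc n n" unfolding succc_def by simp
        thus ?thesis using n by auto
      next
        case False
        hence "j = succc n (j - 1)" using j unfolding succc_def by auto
        moreover have "j - 1 \<in> {1..n}" using j False by auto
        ultimately show ?thesis by blast
      qed
    qed
  qed
qed

lemma sum_succc: assumes "1 \<le> n" shows "(\<Sum>i=1..n. f (succc n i)) = (\<Sum>i=1..n. f i)"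
  by (rule sum.reindex_bij_betw[OF succc_bij[OF assms]])

lemma cyc_tel: assumes "1 \<le> n" shows "(\<Sum>i=1..n. (f i - f (succc n i) :: 'a::ab_group_add)) = 0"
proof -
  have "(\<Sum>i=1..n. (f i - f (succc n i))) = (\<Sum>i=1..n. f i) - (\<Sum>i=1..n. f (succc n i))"
    by (rule sum_subtractf)
  also have "(\<Sum>i=1..n. f (succc n i)) = (\<Sum>i=1..n. f i)" by (rule sum_succc[OF assms])
  finally show ?thesis by simp
qed

lemma comp_zero_Mat[simp]: "compE p (Mat n q c) zeroE = zeroE"
  by (rule comp_zero_right[OF hom_Mat])

lemma II_E:
  assumes "f \<in> II n p"
  obtains (B) w where "p = 1" "w n = 0" "f = Mat n 1 (arrB (\<lambda>_. 0) (\<lambda>_. 0) w)"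
    | (C) c where "p = 2" "(\<Sum>i=1..n. c i) = 0" "f = Mat n 2 (arrC c)"
    | (Z) "p \<noteq> 1" "p \<noteq> 2" "f = zeroE"
  using assms unfolding II_def by (auto split: if_splits)

lemma VV_E:
  assumes "f \<in> VV n p"
  obtains (A) r s where "p = 0" "f = Mat n 0 (arrA r s 0)"
    | (B) r u w where "p = 1" "w n = 0" "f = Mat n 1 (arrB r u w)"
    | (C) c where "p = 2" "f = Mat n 2 (arrC c)"
    | (Z) "p \<noteq> 0" "p \<noteq> 1" "p \<noteq> 2" "f = zeroE"
  using assms unfolding VV_def by (auto split: if_splits)

lemma II_I: "w n = 0 \<Longrightarrow> Mat n 1 (arrB (\<lambda>_. 0) (\<lambda>_. 0) w) \<in> II n 1"
  "(\<Sum>i=1..n. c i) = 0 \<Longrightarrow> Mat n 2 (arrC c) \<in> II n 2"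
  unfolding II_def by auto

lemma VV_I: "Mat n 0 (arrA r s 0) \<in> VV n 0"
  "w n = 0 \<Longrightarrow> Mat n 1 (arrB r u w) \<in> VV n 1"
  "Mat n 2 (arrC c) \<in> VV n 2"
  unfolding VV_def by auto

lemma dB_II: "2 \<le> n \<Longrightarrow> Mat n 2 (arrC (\<lambda>i. w i - w (succc n i))) \<in> II n 2"
  by (rule II_I(2)) (rule cyc_tel, simp)

lemma hom_II: "f \<in> II n p \<Longrightarrow> hom n p f"
  using II_UU hom_UU by blast

lemma hom_VV: "f \<in> VV n p \<Longrightarrow> hom n p f"
  using VV_UU hom_UU by blast

lemma I_ideal:
  assumes n: "2 \<le> n"
  shows "dg_ideal n (II n :: int \<Rightarrow> 'r::idom endo set) (UU n)"
  unfolding dg_ideal_def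
proof (intro conjI allI)
  fix p
  show "(II n p :: 'r endo set) \<subseteq> UU n p" by (rule II_UU)
  show "submod (II n p :: 'r endo set)" unfolding submod_def
  proof (intro conjI ballI allI)
    show "zeroE \<in> II n p" by (rule zero_II)
  next
    fix f g :: "'r endo" assume f: "f \<in> II n p" and g: "g \<in> II n p"
    show "addE f g \<in> II n p"
      using f g by (cases rule: II_E[OF f]; cases rule: II_E[OF g])
        (auto simp: addB addC zero_II II_I sum.distrib)
  next
    fix r and f :: "'r endo" assume f: "f \<in> II n p"
    show "smulE r f \<in> II n p"
      using f by (cases rule: II_E[OF f]) (auto simp: smulB smulC zero_II II_I sum_distrib_left[symmetric])
  qed
  show "dEnd n p ` II n p \<subseteq> (II n (p + 1) :: 'r endo set)"
  proof
    fix x :: "'r endo" assume "x \<in> dEnd n p ` II n p"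
    then obtain f where f: "f \<in> II n p" and x: "x = dEnd n p f" by blast
    show "x \<in> II n (p + 1)"
      using f x n by (cases rule: II_E[OF f]) (auto simp: dB[OF n] dC dEnd_zero zero_II II_I dB_II)
  qed
  show "\<forall>f\<in>UU n p. \<forall>g\<in>II n q. compE p g f \<in> (II n (p + q) :: 'r endo set) \<and> compE q f g \<in> II n (p + q)" for q
  proof (intro allI ballI)
    fix f g :: "'r endo" assume f: "f \<in> UU n p" and g: "g \<in> II n q"
    show "compE p g f \<in> II n (p + q) \<and> compE q f g \<in> II n (p + q)"
      using f
    proof (cases rule: UU_E)
      case Z thus ?thesis using hom_II[OF g] by (simp add: comp_zero_right comp_zero_left zero_II)
    next
      case fA: (A r s t)
      show ?thesis using g fA
        by (cases rule: II_E[OF g]) (auto simp: compAB[OF n] compBA[OF n] compCA[OF n] compAC[OF n]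
            comp_zero_left comp_zero_right hom_UU zero_II II_I sum_distrib_left[symmetric] sum_distrib_right[symmetric])
    next
      case fB: (B r u w)
      show ?thesis using g fB
        by (cases rule: II_E[OF g]) (auto simp: compBB[OF n] comp_high comp_zero_left comp_zero_right hom_UU zero_II II_I)
    next
      case fC: (C c)
      show ?thesis using g fC
        by (cases rule: II_E[OF g]) (auto simp: comp_high comp_zero_left comp_zero_right hom_UU zero_II II_I)
    qed
  qed
qed

lemma V_subalg:
  assumes n: "2 \<le> n"
  shows "dg_subalg n (VV n :: int \<Rightarrow> 'r::idom endo set) (UU n)"
  unfolding dg_subalg_def
proof (intro conjI allI)
  show "idE n \<in> (VV n 0 :: 'r endo set)" by (subst idE_A) (rule VV_I)
next
  fix p
  show "(VV n p :: 'r endo set) \<subseteq> UU n p" by (rule VV_UU)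
  show "submod (VV n p :: 'r endo set)" unfolding submod_def
  proof (intro conjI ballI allI)
    show "zeroE \<in> VV n p" by (rule zero_VV)
  next
    fix f g :: "'r endo" assume f: "f \<in> VV n p" and g: "g \<in> VV n p"
    show "addE f g \<in> VV n p"
      using f g by (cases rule: VV_E[OF f]; cases rule: VV_E[OF g]) (auto simp: addA addB addC zero_VV VV_I)
  next
    fix r and f :: "'r endo" assume f: "f \<in> VV n p"
    show "smulE r f \<in> VV n p"
      using f by (cases rule: VV_E[OF f]) (auto simp: smulA smulB smulC zero_VV VV_I)
  qed
  show "dEnd n p ` VV n p \<subseteq> (VV n (p + 1) :: 'r endo set)"
  proof
    fix x :: "'r endo" assume "x \<in> dEnd n p ` VV n p"
    then obtain f where f: "f \<in> VV n p" and x: "x = dEnd n p f" by blast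
    show "x \<in> VV n (p + 1)"
      using f x by (cases rule: VV_E[OF f]) (auto simp: dA[OF n] dB[OF n] dC dEnd_zero zero_VV VV_I)
  qed
  show "\<forall>f\<in>VV n p. \<forall>g\<in>VV n q. compE p g f \<in> (VV n (p + q) :: 'r endo set)" for q
  proof (intro allI ballI)
    fix f g :: "'r endo" assume f: "f \<in> VV n p" and g: "g \<in> VV n q"
    show "compE p g f \<in> VV n (p + q)"
      using f
    proof (cases rule: VV_E)
      case Z thus ?thesis using hom_VV[OF g] by (simp add: comp_zero_right zero_VV)
    next
      case fA: (A r s)
      show ?thesis using g fA
        by (cases rule: VV_E[OF g]) (auto simp: compAA[OF n] compBA[OF n] compCA[OF n] comp_zero_left zero_VV VV_I)
    next
      case fB: (B r u w)
      show ?thesis using g fB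
        by (cases rule: VV_E[OF g]) (auto simp: compAB[OF n] compBB[OF n] comp_high comp_zero_left zero_VV VV_I)
    next
      case fC: (C c)
      show ?thesis using g fC
        by (cases rule: VV_E[OF g]) (auto simp: compAC[OF n] comp_high comp_zero_left zero_VV VV_I)
    qed
  qed
qed

lemma dV_I:
  assumes n: "2 \<le> n"
  shows "dEnd n p ` VV n p \<subseteq> (II n (p + 1) :: 'r::idom endo set)"
proof
  fix x :: "'r endo" assume "x \<in> dEnd n p ` VV n p"
  then obtain f where f: "f \<in> VV n p" and x: "x = dEnd n p f" by blast
  show "x \<in> II n (p + 1)"
    using f x n by (cases rule: VV_E[OF f]) (auto simp: dA[OF n] dB[OF n] dC dEnd_zero zero_II II_I dB_II)
qed

definition dArr :: "nat \<Rightarrow> int \<Rightarrow> (int \<Rightarrow> stratum \<Rightarrow> stratum \<Rightarrow> 'r::idom) \<Rightarrow> int \<Rightarrow> stratum \<Rightarrow> stratum \<Rightarrow> 'r" where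
  "dArr n p c = (\<lambda>k Y X. mprod n 1 p (cdk n) c k Y X - eps p * mprod n p 1 c (cdk n) k Y X)"

lemma dEnd_Mat': "dEnd n p (Mat n p c) = Mat n (p + 1) (dArr n p c)"
  unfolding dEnd_Mat dArr_def ..

lemmas esimps = mprod_P mprod_E mprod_H ct_def rel_def eps_def algebra_simps

context
  fixes n :: nat and i :: nat and c :: "int \<Rightarrow> stratum \<Rightarrow> stratum \<Rightarrow> 'r::idom"
  assumes n: "2 \<le> n" and i: "1 \<le> i" "i \<le> n"
begin

lemma dArrm1_HH: "j = 1 \<or> j = 2 \<Longrightarrow> dArr n (-1) c (-1) (H j) (H j) = 0"
  using n i unfolding dArr_def by (auto simp: esimps)
lemma dArrm1_EE: "dArr n (-1) c 0 (E i) (E i) = 0"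
  using n i unfolding dArr_def by (simp add: esimps)
lemma dArrm1_PE: "dArr n (-1) c 0 (P i) (E i) = c 1 (P i) (P i)"
  using n i succc_neq[OF n i] unfolding dArr_def by (simp add: esimps)
lemma dArrm1_PEs: "dArr n (-1) c 0 (P i) (E (succc n i)) = - c 1 (P i) (P i)"
  using n i succc_neq[OF n i] unfolding dArr_def by (simp add: esimps)
lemma dArrm1_PP0: "dArr n (-1) c 0 (P i) (P i) = 0"
  using n i unfolding dArr_def by (simp add: esimps)
lemma dArrm1_PP1: "dArr n (-1) c 1 (P i) (P i) = 0"
  using n i unfolding dArr_def by (simp add: esimps)

lemma dArr0_EH1: "dArr n 0 c (-1) (E i) (H 1) = c (-1) (H 1) (H 1) - c 0 (E i) (E i)"
  using n i unfolding dArr_def by (simp add: esimps)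
lemma dArr0_EH2: "dArr n 0 c (-1) (E i) (H 2) = c 0 (E i) (E i) - c (-1) (H 2) (H 2)"
  using n i unfolding dArr_def by (simp add: esimps)
lemma dArr0_PH1: "dArr n 0 c (-1) (P i) (H 1) = - (c 0 (P i) (E i) + c 0 (P i) (E (succc n i)))"
  using n i succc_neq[OF n i] unfolding dArr_def by (simp add: esimps)
lemma dArr0_PH2: "dArr n 0 c (-1) (P i) (H 2) = c 0 (P i) (E i) + c 0 (P i) (E (succc n i))"
  using n i succc_neq[OF n i] unfolding dArr_def by (simp add: esimps)
lemma dArr0_PE: "dArr n 0 c 0 (P i) (E i) = c 0 (E i) (E i) - c 1 (P i) (P i)"
  using n i succc_neq[OF n i] unfolding dArr_def by (simp add: esimps)
lemma dArr0_PEs: "dArr n 0 c 0 (P i) (E (succc n i)) = c 1 (P i) (P i) - c 0 (E (succc n i)) (E (succc n i))"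
  using n i succc_neq[OF n i] unfolding dArr_def by (simp add: esimps)
lemma dArr0_PP: "dArr n 0 c 0 (P i) (P i) = 0"
  using n i succc_neq[OF n i] unfolding dArr_def by (simp add: esimps)

lemma dArr1_PH1: "dArr n 1 c (-1) (P i) (H 1) = c (-1) (E i) (H 1) - c (-1) (E (succc n i)) (H 1)
   + (c 0 (P i) (E i) + c 0 (P i) (E (succc n i)))"
  using n i succc_neq[OF n i] unfolding dArr_def by (simp add: esimps)
lemma dArr1_PH2: "dArr n 1 c (-1) (P i) (H 2) = c (-1) (E i) (H 2) - c (-1) (E (succc n i)) (H 2)
   - (c 0 (P i) (E i) + c 0 (P i) (E (succc n i)))"
  using n i succc_neq[OF n i] unfolding dArr_def by (simp add: esimps)

end

lemma Mat_entry: "Mat n p a = Mat n p b \<Longrightarrow> rel n p k Y X \<Longrightarrow> a k Y X = b k Y X"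
  unfolding Mat_eq_iff by blast

lemma const_succ:
  assumes h: "\<And>i. 1 \<le> i \<Longrightarrow> i \<le> n \<Longrightarrow> w (succc n i) = w i"
  shows "1 \<le> i \<Longrightarrow> i \<le> n \<Longrightarrow> w i = w 1"
proof (induction i)
  case 0 thus ?case by simp
next
  case (Suc j)
  show ?case
  proof (cases "j = 0")
    case True thus ?thesis by simp
  next
    case False
    hence "w (succc n j) = w j" using h Suc.prems by auto
    moreover have "succc n j = Suc j" using Suc.prems unfolding succc_def by auto
    ultimately show ?thesis using Suc False by auto
  qed
qed

lemma telescope:
  assumes n: "2 \<le> n" and s: "(\<Sum>i=1..n. c i) = 0"
  shows "Mat n 2 (arrC c) = dEnd n 1 (Mat n 1 (arrB (\<lambda>_. 0) (\<lambda>_. 0) (\<lambda>i. \<Sum>m=i..n. c m)))"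
  unfolding dB[OF n]
proof (rule congC)
  fix i assume i: "1 \<le> i" "i \<le> n"
  show "c i = (\<Sum>m=i..n. c m) - (\<Sum>m=succc n i..n. c m)"
  proof (cases "i = n")
    case True
    hence "succc n i = 1" unfolding succc_def by simp
    thus ?thesis using True s by simp
  next
    case False
    hence "succc n i = Suc i" unfolding succc_def by simp
    moreover have "(\<Sum>m=i..n. c m) = c i + (\<Sum>m=Suc i..n. c m)" using i by (simp add: sum.atLeast_Suc_atMost)
    ultimately show ?thesis by simp
  qed
qed

lemma subE_self: "subE f f = zeroE"
  unfolding subE_def zeroE_def by simp

lemma addE_zero_right: "addE f zeroE = f"
  unfolding addE_def zeroE_def by simp

lemma B_cycle_const:
  assumes n: "2 \<le> n" and d: "dEnd n 1 (Mat n 1 (arrB r u w)) = zeroE" and i: "1 \<le> i" "i \<le> n"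
  shows "w i = w n"
proof -
  from d have "Mat n 2 (arrC (\<lambda>i. w i - w (succc n i))) = zeroE" by (simp only: dB[OF n])
  hence e: "Mat n 2 (arrC (\<lambda>i. w i - w (succc n i))) = Mat n 2 (arrC (\<lambda>_. 0))" by (simp only: zeroC[of n])
  have h: "w (succc n j) = w j" if "1 \<le> j" "j \<le> n" for j
    using eqC[OF e that] by simp
  have cs: "\<And>k. 1 \<le> k \<Longrightarrow> k \<le> n \<Longrightarrow> w k = w 1" using const_succ[where w=w and n=n, OF h] by blast
  have "w i = w 1" using cs i by blast
  moreover have "w n = w 1" by (rule cs) (use n in auto)
  ultimately show ?thesis by simp
qed

lemma A_dI_t0:
  assumes n: "2 \<le> n" and d: "dEnd n 0 (Mat n 0 (arrA r s t)) \<in> II n 1"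
  shows "t = 0"
proof -
  obtain w where w: "w n = 0" "Mat n 1 (arrB (\<lambda>_. 0) (\<lambda>_. 0) (\<lambda>_. t)) = Mat n 1 (arrB (\<lambda>_. 0) (\<lambda>_. 0) w)"
    using d unfolding dA[OF n] II_def by auto
  from eqB[OF w(2), of n] n w(1) show ?thesis by simp
qed

lemma B_split:
  assumes n: "2 \<le> n"
  shows "subE (Mat n 1 (arrB r u w)) (Mat n 1 (arrB r u (\<lambda>_. 0))) =
    addE (dEnd n 0 (Mat n 0 (arrA (\<lambda>_. 0) 0 (w n)))) (Mat n 1 (arrB (\<lambda>_. 0) (\<lambda>_. 0) (\<lambda>i. w i - w n)))"
  unfolding subB dA[OF n] addB by (rule congB) simp

lemma Q1: assumes n: "2 \<le> n"
  shows "qis n (UU n) zeroG (UU n) (II n :: int \<Rightarrow> 'r::idom endo set)"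
  unfolding qis_def
proof (intro allI conjI ballI impI)
  fix p and a :: "'r endo"
  assume ac: "a \<in> qcycles n (UU n) zeroG p" and ab: "qbdry n (UU n) (II n) p a"
  from ac have aU: "a \<in> UU n p" and da: "dEnd n p a = zeroE"
    unfolding qcycles_def zeroG_def by auto
  from ab obtain b x where bU: "b \<in> UU n (p - 1)" and xI: "x \<in> II n p" and ax: "a = addE (dEnd n (p - 1) b) x"
    unfolding qbdry_def by blast
  show "qbdry n (UU n) zeroG p a"
    using xI
  proof (cases rule: II_E)
    case Z thus ?thesis using bU ax unfolding qbdry_def zeroG_def by blast
  next
    case (B w)
    note p = B(1)
    from bU p obtain r' s' t' where b: "b = Mat n 0 (arrA r' s' t')" by (auto elim: UU_E)
    from aU p obtain r u wa where a: "a = Mat n 1 (arrB r u wa)" by (auto elim: UU_E)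
    have e: "Mat n 1 (arrB r u wa) = Mat n 1 (arrB (\<lambda>i. 0 + 0) (\<lambda>i. 0 + 0) (\<lambda>i. t' + w i))"
      using ax a b B p by (simp add: dA[OF n] addB)
    have da': "dEnd n 1 (Mat n 1 (arrB r u wa)) = zeroE" using da a p by simp
    have wc: "wa i = wa n" if "1 \<le> i" "i \<le> n" for i using B_cycle_const[OF n da' that] .
    have "r n = 0 + 0 \<and> u n = 0 + 0 \<and> wa n = t' + w n" by (rule eqB[OF e]) (use n in auto)
    hence en: "wa n = t'" using B(2) by simp
    have wz: "w i = 0" if "1 \<le> i" "i \<le> n" for i
    proof -
      have "r i = 0 + 0 \<and> u i = 0 + 0 \<and> wa i = t' + w i" by (rule eqB[OF e that])
      thus ?thesis using wc[OF that] en by simp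
    qed
    have "x = Mat n 1 (arrB (\<lambda>_. 0) (\<lambda>_. 0) (\<lambda>_. 0))" unfolding B(3) by (rule congB) (simp add: wz)
    hence "x = zeroE" by (simp add: zeroB[of n])
    thus ?thesis using bU ax unfolding qbdry_def zeroG_def by blast
  next
    case (C c)
    note p = C(1)
    from bU p obtain r u w where b: "b = Mat n 1 (arrB r u w)" by (auto elim: UU_E)
    from aU p obtain ca where a: "a = Mat n 2 (arrC ca)" by (auto elim: UU_E)
    have e: "Mat n 2 (arrC ca) = Mat n 2 (arrC (\<lambda>i. w i - w (succc n i) + c i))"
      using ax a b C p by (simp add: dB[OF n] addC)
    have "(\<Sum>i=1..n. ca i) = (\<Sum>i=1..n. w i - w (succc n i) + c i)"
    proof (rule sum.cong[OF refl])
      fix i assume "i \<in> {1..n}"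
      hence "1 \<le> i" "i \<le> n" by auto
      from eqC[OF e this] show "ca i = w i - w (succc n i) + c i" by simp
    qed
    also have "\<dots> = (\<Sum>i=1..n. w i - w (succc n i)) + (\<Sum>i=1..n. c i)" by (rule sum.distrib)
    also have "\<dots> = 0" using C(2) cyc_tel[of n w] n by simp
    finally have "a = dEnd n 1 (Mat n 1 (arrB (\<lambda>_. 0) (\<lambda>_. 0) (\<lambda>i. \<Sum>m=i..n. ca m)))"
      unfolding a by (rule telescope[OF n])
    hence "a = addE (dEnd n (p - 1) (Mat n 1 (arrB (\<lambda>_. 0) (\<lambda>_. 0) (\<lambda>i. \<Sum>m=i..n. ca m)))) zeroE"
      using p by (simp add: addE_zero_right)
    moreover have "Mat n 1 (arrB (\<lambda>_. 0) (\<lambda>_. 0) (\<lambda>i. \<Sum>m=i..n. ca m)) \<in> UU n (p - 1)" using p by simp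
    ultimately show ?thesis unfolding qbdry_def zeroG_def by blast
  qed
next
  fix p and b :: "'r endo"
  assume bc: "b \<in> qcycles n (UU n) (II n) p"
  from bc have bU: "b \<in> UU n p" and db: "dEnd n p b \<in> II n (p + 1)" unfolding qcycles_def by auto
  show "\<exists>a\<in>qcycles n (UU n) zeroG p. qbdry n (UU n) (II n) p (subE b a)"
  proof (cases "dEnd n p b = zeroE")
    case True
    hence "b \<in> qcycles n (UU n) zeroG p" using bU unfolding qcycles_def zeroG_def by auto
    moreover have "qbdry n (UU n) (II n) p (subE b b)"
    proof -
      have "subE b b = addE (dEnd n (p - 1) zeroE) zeroE" by (simp add: subE_self dEnd_zero)
      thus ?thesis unfolding qbdry_def using zero_UU[of n "p - 1"] zero_II[of n p] by blast
    qed
    ultimately show ?thesis by blast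
  next
    case False
    show ?thesis
      using bU
    proof (cases rule: UU_E)
      case (A r s t)
      have "t = 0" by (rule A_dI_t0[OF n]) (use db A in simp)
      hence "dEnd n p b = zeroE" using A by (simp add: dA[OF n] zeroB[of n])
      thus ?thesis using False by simp
    next
      case (B r u w)
      let ?a = "Mat n 1 (arrB r u (\<lambda>_. 0))"
      have "dEnd n 1 ?a = zeroE" by (simp add: dB[OF n] zeroC[of n])
      hence "?a \<in> qcycles n (UU n) zeroG p" using B unfolding qcycles_def zeroG_def by auto
      moreover have "qbdry n (UU n) (II n) p (subE b ?a)"
      proof -
        have "Mat n 0 (arrA (\<lambda>_. 0) 0 (w n)) \<in> UU n (p - 1)" using B by simp
        moreover have "Mat n 1 (arrB (\<lambda>_. 0) (\<lambda>_. 0) (\<lambda>i. w i - w n)) \<in> II n p"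
          using B II_I(1)[of "\<lambda>i. w i - w n" n] by simp
        moreover have "subE b ?a = addE (dEnd n (p - 1) (Mat n 0 (arrA (\<lambda>_. 0) 0 (w n))))
            (Mat n 1 (arrB (\<lambda>_. 0) (\<lambda>_. 0) (\<lambda>i. w i - w n)))"
          using B B_split[OF n, of r u w] by simp
        ultimately show ?thesis unfolding qbdry_def by blast
      qed
      ultimately show ?thesis by blast
    next
      case (C c) thus ?thesis using False by (simp add: dC)
    next
      case Z thus ?thesis using False by (simp add: dEnd_zero)
    qed
  qed
qed

lemma qbdry_self:
  "qbdry n (UU n) (II n) p (subE b b)"
proof -
  have "subE b b = addE (dEnd n (p - 1) zeroE) zeroE" by (simp add: subE_self dEnd_zero)
  thus ?thesis unfolding qbdry_def using zero_UU[of n "p - 1"] zero_II[of n p] by blast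
qed

lemma VI_cyc: "2 \<le> n \<Longrightarrow> a \<in> VV n p \<Longrightarrow> a \<in> qcycles n (VV n) (II n) p"
  unfolding qcycles_def using dV_I by blast

lemma Q2: assumes n: "2 \<le> n"
  shows "qis n (VV n) (II n) (UU n) (II n :: int \<Rightarrow> 'r::idom endo set)"
  unfolding qis_def
proof (intro allI conjI ballI impI)
  fix p and a :: "'r endo"
  assume ac: "a \<in> qcycles n (VV n) (II n) p" and ab: "qbdry n (UU n) (II n) p a"
  from ac have aV: "a \<in> VV n p" unfolding qcycles_def by auto
  from ab obtain b x where bU: "b \<in> UU n (p - 1)" and xI: "x \<in> II n p" and ax: "a = addE (dEnd n (p - 1) b) x"
    unfolding qbdry_def by blast
  show "qbdry n (VV n) (II n) p a"
    using bU
  proof (cases rule: UU_E)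
    case (A r' s' t')
    hence p: "p = 1" by simp
    from aV p obtain r u w where a: "a = Mat n 1 (arrB r u w)" and wn: "w n = 0" by (auto elim: VV_E)
    from xI p obtain w' where x: "x = Mat n 1 (arrB (\<lambda>_. 0) (\<lambda>_. 0) w')" and wn': "w' n = 0"
      by (auto elim: II_E)
    have e: "Mat n 1 (arrB r u w) = Mat n 1 (arrB (\<lambda>i. 0 + 0) (\<lambda>i. 0 + 0) (\<lambda>i. t' + w' i))"
      using ax a A x p by (simp add: dA[OF n] addB)
    have "r n = 0 + 0 \<and> u n = 0 + 0 \<and> w n = t' + w' n" by (rule eqB[OF e]) (use n in auto)
    hence "t' = 0" using wn wn' by simp
    hence "b \<in> VV n (p - 1)" using A p by (simp add: VV_I)
    thus ?thesis using xI ax unfolding qbdry_def by blast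
  next
    case (B r u w)
    hence p: "p = 2" by simp
    let ?b = "Mat n 1 (arrB r u (\<lambda>i. w i - w n))"
    have "?b \<in> VV n (p - 1)" using p by (simp add: VV_I)
    moreover have "dEnd n (p - 1) ?b = dEnd n (p - 1) b"
      using B p by (simp add: dB[OF n])
    ultimately show ?thesis using xI ax unfolding qbdry_def by metis
  next
    case (C c)
    hence "b \<in> VV n (p - 1)" by (simp add: VV_I)
    thus ?thesis using xI ax unfolding qbdry_def by blast
  next
    case Z
    hence "b \<in> VV n (p - 1)" using zero_VV by simp
    thus ?thesis using xI ax unfolding qbdry_def by blast
  qed
next
  fix p and b :: "'r endo"
  assume bc: "b \<in> qcycles n (UU n) (II n) p"
  from bc have bU: "b \<in> UU n p" and db: "dEnd n p b \<in> II n (p + 1)" unfolding qcycles_def by auto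
  show "\<exists>a\<in>qcycles n (VV n) (II n) p. qbdry n (UU n) (II n) p (subE b a)"
  proof (cases "b \<in> VV n p")
    case True thus ?thesis using VI_cyc[OF n] qbdry_self by blast
  next
    case False
    show ?thesis
      using bU
    proof (cases rule: UU_E)
      case (A r s t)
      have "t = 0" by (rule A_dI_t0[OF n]) (use db A in simp)
      hence "b \<in> VV n p" using A by (simp add: VV_I)
      thus ?thesis using False by simp
    next
      case (B r u w)
      let ?a = "Mat n 1 (arrB r u (\<lambda>_. 0))"
      have "?a \<in> VV n p" using B by (simp add: VV_I)
      hence "?a \<in> qcycles n (VV n) (II n) p" using VI_cyc[OF n] by blast
      moreover have "qbdry n (UU n) (II n) p (subE b ?a)"
      proof -
        have "Mat n 0 (arrA (\<lambda>_. 0) 0 (w n)) \<in> UU n (p - 1)" using B by simp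
        moreover have "Mat n 1 (arrB (\<lambda>_. 0) (\<lambda>_. 0) (\<lambda>i. w i - w n)) \<in> II n p"
          using B II_I(1)[of "\<lambda>i. w i - w n" n] by simp
        moreover have "subE b ?a = addE (dEnd n (p - 1) (Mat n 0 (arrA (\<lambda>_. 0) 0 (w n))))
            (Mat n 1 (arrB (\<lambda>_. 0) (\<lambda>_. 0) (\<lambda>i. w i - w n)))"
          using B B_split[OF n, of r u w] by simp
        ultimately show ?thesis unfolding qbdry_def by blast
      qed
      ultimately show ?thesis by blast
    next
      case (C c) thus ?thesis using False by (simp add: VV_I)
    next
      case Z thus ?thesis using False zero_VV by blast
    qed
  qed
qed

definition arrT :: "(nat \<Rightarrow> 'r::idom) \<Rightarrow> int \<Rightarrow> stratum \<Rightarrow> stratum \<Rightarrow> 'r" where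
  "arrT e k Y X = (if k = 1 then (case Y of P i \<Rightarrow> if X = P i then e i else 0 | _ \<Rightarrow> 0) else 0)"

lemmas dArr0_EH1' = dArr0_EH1[unfolded One_nat_def]
lemmas dArr0_PH1' = dArr0_PH1[unfolded One_nat_def]
lemmas dArr1_PH1' = dArr1_PH1[unfolded One_nat_def]

lemma dArrm1_HH': "2 \<le> n \<Longrightarrow> j = 1 \<or> j = 2 \<Longrightarrow> dArr n (-1) c (-1) (H j) (H j) = 0"
  using dArrm1_HH[of n 1] by auto

lemma zero_entry: "Mat n p c = zeroE \<Longrightarrow> rel n p k Y X \<Longrightarrow> c k Y X = 0"
  using Mat_entry[of n p c "\<lambda>_ _ _. 0"] zeroE_Mat[of n p] by simp

lemma cyc_m1:
  assumes n: "2 \<le> n" and d: "dEnd n (-1) (Mat n (-1) cb) = zeroE"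
  shows "Mat n (-1) cb = zeroE"
proof -
  have d': "Mat n 0 (dArr n (-1) cb) = zeroE" using d by (simp add: dEnd_Mat')
  have "cb 1 (P i) (P i) = 0" if "1 \<le> i" "i \<le> n" for i
    using zero_entry[OF d', of 0 "P i" "E i"] that by (simp add: rel_def dArrm1_PE[OF n that])
  hence "Mat n (-1) cb = Mat n (-1) (\<lambda>_ _ _. 0)" unfolding Mat_eq_iff rel_cases by auto
  thus ?thesis by (simp add: zeroE_Mat[of n "-1", symmetric])
qed

lemma cyc_0:
  fixes cb :: "int \<Rightarrow> stratum \<Rightarrow> stratum \<Rightarrow> 'r::idom"
  assumes n: "2 \<le> n" and d: "dEnd n 0 (Mat n 0 cb) = zeroE"
  shows "\<exists>a c. a \<in> UU n 0 \<and> dEnd n 0 a = zeroE \<and> c \<in> EndJ n (-1) \<and>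
     subE (Mat n 0 cb) a = addE (dEnd n (-1) c) zeroE"
proof -
  have d': "Mat n 1 (dArr n 0 cb) = zeroE" using d by (simp add: dEnd_Mat')
  define \<sigma> where "\<sigma> = cb (-1) (H 2) (H 2)"
  have F2: "cb 0 (E i) (E i) = \<sigma>" if "1 \<le> i" "i \<le> n" for i
    using zero_entry[OF d', of "-1" "E i" "H 2"] that unfolding \<sigma>_def by (simp add: rel_def dArr0_EH2[OF n that])
  have F1: "cb (-1) (H 1) (H 1) = cb 0 (E i) (E i)" if "1 \<le> i" "i \<le> n" for i
    using zero_entry[OF d', of "-1" "E i" "H 1"] that by (simp add: rel_def dArr0_EH1'[OF n] that)
  have F0: "cb (-1) (H 1) (H 1) = \<sigma>" using F1[of 1] F2[of 1] n by simp
  note F0' = F0[unfolded One_nat_def]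
  have F3: "cb 0 (P i) (E (succc n i)) = - cb 0 (P i) (E i)" if "1 \<le> i" "i \<le> n" for i
    using zero_entry[OF d', of "-1" "P i" "H 2"] that
    by (simp add: rel_def dArr0_PH2[OF n that] eq_neg_iff_add_eq_0 add.commute)
  have F4: "cb 1 (P i) (P i) = \<sigma>" if "1 \<le> i" "i \<le> n" for i
    using zero_entry[OF d', of 0 "P i" "E i"] that F2[OF that] by (simp add: rel_def dArr0_PE[OF n that])
  let ?a = "Mat n 0 (arrA (\<lambda>i. cb 0 (P i) (P i)) \<sigma> 0)"
  let ?c = "Mat n (-1) (arrT (\<lambda>i. cb 0 (P i) (E i)))"
  have "?a \<in> UU n 0" by simp
  moreover have "dEnd n 0 ?a = zeroE" by (simp add: dA[OF n] zeroB[of n])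
  moreover have "?c \<in> EndJ n (-1)" by simp
  moreover have "subE (Mat n 0 cb) ?a = addE (dEnd n (-1) ?c) zeroE"
  proof -
    have "addE (dEnd n (-1) ?c) zeroE = Mat n 0 (\<lambda>k Y X. dArr n (-1) (arrT (\<lambda>i. cb 0 (P i) (E i))) k Y X + 0)"
      by (simp add: dEnd_Mat' zeroE_Mat[of n 0] addE_Mat)
    moreover have "subE (Mat n 0 cb) ?a = Mat n 0 (\<lambda>k Y X. cb k Y X - arrA (\<lambda>i. cb 0 (P i) (P i)) \<sigma> 0 k Y X)"
      by (simp add: subE_Mat)
    moreover have "Mat n 0 (\<lambda>k Y X. cb k Y X - arrA (\<lambda>i. cb 0 (P i) (P i)) \<sigma> 0 k Y X)
       = Mat n 0 (\<lambda>k Y X. dArr n (-1) (arrT (\<lambda>i. cb 0 (P i) (E i))) k Y X + 0)"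
      unfolding Mat_eq_iff
      apply (intro allI impI, subst (asm) rel_cases, elim disjE exE conjE)
      using n succc_neq[OF n]
      by (simp_all add: dArrm1_HH'[OF n] dArrm1_EE dArrm1_PE dArrm1_PEs dArrm1_PP0 dArrm1_PP1 arrA_def arrT_def
           F0 F0' F2 F3 F4 \<sigma>_def)
    ultimately show ?thesis by simp
  qed
  ultimately show ?thesis by blast
qed

definition arrG :: "'r \<Rightarrow> (int \<Rightarrow> stratum \<Rightarrow> stratum \<Rightarrow> 'r::idom) \<Rightarrow> int \<Rightarrow> stratum \<Rightarrow> stratum \<Rightarrow> 'r" where
  "arrG K cb k Y X = (if k = -1 then (if Y = H 1 \<and> X = H 1 then K else 0)
    else if k = 0 then (case Y of E i \<Rightarrow> if X = E i then cb (-1) (E i) (H 2) else 0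
                            | P i \<Rightarrow> if X = E i then cb (-1) (P i) (H 2) else 0 | _ \<Rightarrow> 0)
    else if k = 1 then (case Y of P i \<Rightarrow> if X = P i then cb (-1) (E i) (H 2) - cb 0 (P i) (E i) else 0 | _ \<Rightarrow> 0)
    else 0)"

definition arrZ :: "(int \<Rightarrow> stratum \<Rightarrow> stratum \<Rightarrow> 'r::idom) \<Rightarrow> int \<Rightarrow> stratum \<Rightarrow> stratum \<Rightarrow> 'r" where
  "arrZ cb k Y X = (if k = 0 then (case Y of P i \<Rightarrow> if X = E i then - cb (-1) (P i) (H 2) else 0 | _ \<Rightarrow> 0) else 0)"

lemma cyc_1:
  fixes cb :: "int \<Rightarrow> stratum \<Rightarrow> stratum \<Rightarrow> 'r::idom"
  assumes n: "2 \<le> n" and d: "dEnd n 1 (Mat n 1 cb) = zeroE"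
  shows "\<exists>a c. a \<in> UU n 1 \<and> dEnd n 1 a = zeroE \<and> c \<in> EndJ n 0 \<and>
     subE (Mat n 1 cb) a = addE (dEnd n 0 c) zeroE"
proof -
  have d': "Mat n 2 (dArr n 1 cb) = zeroE" using d by (simp add: dEnd_Mat' one_add_one)
  have G1: "cb (-1) (E i) (H 1) - cb (-1) (E (succc n i)) (H 1) + (cb 0 (P i) (E i) + cb 0 (P i) (E (succc n i))) = 0"
    if "1 \<le> i" "i \<le> n" for i
  proof -
    have "dArr n 1 cb (-1) (P i) (H 1) = 0" by (rule zero_entry[OF d']) (use that in \<open>simp add: rel_def\<close>)
    thus ?thesis by (simp only: dArr1_PH1[OF n that])
  qed
  have G2: "cb (-1) (E i) (H 2) - cb (-1) (E (succc n i)) (H 2) - (cb 0 (P i) (E i) + cb 0 (P i) (E (succc n i))) = 0"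
    if "1 \<le> i" "i \<le> n" for i
  proof -
    have "dArr n 1 cb (-1) (P i) (H 2) = 0" by (rule zero_entry[OF d']) (use that in \<open>simp add: rel_def\<close>)
    thus ?thesis by (simp only: dArr1_PH2[OF n that])
  qed
  define y where "y i = cb (-1) (E i) (H 1) + cb (-1) (E i) (H 2)" for i
  have ys: "y (succc n i) = y i" if "1 \<le> i" "i \<le> n" for i
    using G1[OF that] G2[OF that] unfolding y_def by (simp add: algebra_simps)
  have yc: "y i = y 1" if "1 \<le> i" "i \<le> n" for i using const_succ[where w=y and n=n, OF ys] that by blast
  define K where "K = cb (-1) (E 1) (H 1) + cb (-1) (E 1) (H 2)"
  have Y1: "cb (-1) (E i) (H 1) = K - cb (-1) (E i) (H 2)"
    if "1 \<le> i" "i \<le> n" for i using yc[OF that] unfolding y_def K_def by (simp add: algebra_simps)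
  have Y2: "cb 0 (P i) (E (succc n i)) = cb (-1) (E i) (H 2) - cb (-1) (E (succc n i)) (H 2) - cb 0 (P i) (E i)"
    if "1 \<le> i" "i \<le> n" for i using G2[OF that] by (simp add: algebra_simps)
  note Y1' = Y1[unfolded One_nat_def]
  let ?a = "Mat n 1 (arrB (\<lambda>i. cb 0 (P i) (P i)) (\<lambda>i. cb (-1) (P i) (H 1) + cb (-1) (P i) (H 2)) (\<lambda>_. 0))"
  let ?c = "Mat n 0 (arrG K cb)"
  have "?a \<in> UU n 1" by simp
  moreover have "dEnd n 1 ?a = zeroE" by (simp add: dB[OF n] zeroC[of n])
  moreover have "?c \<in> EndJ n 0" by simp
  moreover have "subE (Mat n 1 cb) ?a = addE (dEnd n 0 ?c) zeroE"
  proof -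
    have "addE (dEnd n 0 ?c) zeroE = Mat n 1 (\<lambda>k Y X. dArr n 0 (arrG K cb) k Y X + 0)"
      by (simp add: dEnd_Mat' zeroE_Mat[of n 1] addE_Mat)
    moreover have "subE (Mat n 1 cb) ?a = Mat n 1 (\<lambda>k Y X. cb k Y X - arrB (\<lambda>i. cb 0 (P i) (P i)) (\<lambda>i. cb (-1) (P i) (H 1) + cb (-1) (P i) (H 2)) (\<lambda>_. 0) k Y X)"
      by (simp add: subE_Mat)
    moreover have "Mat n 1 (\<lambda>k Y X. cb k Y X - arrB (\<lambda>i. cb 0 (P i) (P i)) (\<lambda>i. cb (-1) (P i) (H 1) + cb (-1) (P i) (H 2)) (\<lambda>_. 0) k Y X)
       = Mat n 1 (\<lambda>k Y X. dArr n 0 (arrG K cb) k Y X + 0)"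
      unfolding Mat_eq_iff
      apply (intro allI impI, subst (asm) rel_cases, elim disjE exE conjE)
      using n succc_neq[OF n]
      by (simp_all add: dArr0_EH1' dArr0_EH2 dArr0_PH1' dArr0_PH2 dArr0_PE dArr0_PEs dArr0_PP arrB_def arrG_def
           Y1' Y2 algebra_simps)
    ultimately show ?thesis by simp
  qed
  ultimately show ?thesis by blast
qed

lemma cyc_2:
  fixes cb :: "int \<Rightarrow> stratum \<Rightarrow> stratum \<Rightarrow> 'r::idom"
  assumes n: "2 \<le> n"
  shows "\<exists>a c. a \<in> UU n 2 \<and> dEnd n 2 a = zeroE \<and> c \<in> EndJ n 1 \<and>
     subE (Mat n 2 cb) a = addE (dEnd n 1 c) zeroE"
proof -
  let ?a = "Mat n 2 (arrC (\<lambda>i. cb (-1) (P i) (H 1) + cb (-1) (P i) (H 2)))"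
  let ?c = "Mat n 1 (arrZ cb)"
  have "?a \<in> UU n 2" by simp
  moreover have "dEnd n 2 ?a = zeroE" by (rule dC)
  moreover have "?c \<in> EndJ n 1" by simp
  moreover have "subE (Mat n 2 cb) ?a = addE (dEnd n 1 ?c) zeroE"
  proof -
    have "addE (dEnd n 1 ?c) zeroE = Mat n 2 (\<lambda>k Y X. dArr n 1 (arrZ cb) k Y X + 0)"
      by (simp add: dEnd_Mat' zeroE_Mat[of n 2] addE_Mat one_add_one)
    moreover have "subE (Mat n 2 cb) ?a = Mat n 2 (\<lambda>k Y X. cb k Y X - arrC (\<lambda>i. cb (-1) (P i) (H 1) + cb (-1) (P i) (H 2)) k Y X)"
      by (simp add: subE_Mat)
    moreover have "Mat n 2 (\<lambda>k Y X. cb k Y X - arrC (\<lambda>i. cb (-1) (P i) (H 1) + cb (-1) (P i) (H 2)) k Y X)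
       = Mat n 2 (\<lambda>k Y X. dArr n 1 (arrZ cb) k Y X + 0)"
      unfolding Mat_eq_iff
      apply (intro allI impI, subst (asm) rel_cases, elim disjE exE conjE)
      using n succc_neq[OF n]
      by (simp_all add: dArr1_PH1' dArr1_PH2 arrC_def arrZ_def algebra_simps)
    ultimately show ?thesis by simp
  qed
  ultimately show ?thesis by blast
qed

lemma congA: "(\<And>i. 1 \<le> i \<Longrightarrow> i \<le> n \<Longrightarrow> r i = r' i) \<Longrightarrow> s = s' \<Longrightarrow> t = t' \<Longrightarrow>
   Mat n 0 (arrA r s t) = Mat n 0 (arrA r' s' t')"
  unfolding Mat_eq_iff
  apply (intro allI impI, subst (asm) rel_cases, elim disjE exE conjE)
  by (simp_all add: arrA_def)

lemma inj_0:
  assumes n: "2 \<le> n" and e: "Mat n 0 (arrA r s 0) = addE (dEnd n (-1) (Mat n (-1) cb)) zeroE"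
  shows "Mat n 0 (arrA r s 0) = zeroE"
proof -
  have e': "Mat n 0 (arrA r s 0) = Mat n 0 (\<lambda>k Y X. dArr n (-1) cb k Y X + 0)"
    using e by (simp add: dEnd_Mat' zeroE_Mat[of n 0] addE_Mat)
  have "arrA r s 0 (-1) (H 2) (H 2) = dArr n (-1) cb (-1) (H 2) (H 2) + 0"
    by (rule Mat_entry[OF e']) (simp add: rel_def)
  hence s: "s = 0" by (simp add: arrA_def dArrm1_HH'[OF n])
  have r: "r i = 0" if "1 \<le> i" "i \<le> n" for i
  proof -
    have "arrA r s 0 0 (P i) (P i) = dArr n (-1) cb 0 (P i) (P i) + 0"
      by (rule Mat_entry[OF e']) (use that in \<open>simp add: rel_def\<close>)
    thus ?thesis by (simp add: arrA_def dArrm1_PP0[OF n that])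
  qed
  have "Mat n 0 (arrA r s 0) = Mat n 0 (arrA (\<lambda>_. 0) 0 0)" by (rule congA) (simp_all add: r s)
  thus ?thesis by (simp add: zeroA[of n, symmetric])
qed

lemma inj_1:
  assumes n: "2 \<le> n" and e: "Mat n 1 (arrB r u w) = addE (dEnd n 0 (Mat n 0 cb)) zeroE"
    and i: "1 \<le> i" "i \<le> n"
  shows "r i = 0 \<and> u i = 0"
proof -
  have e': "Mat n 1 (arrB r u w) = Mat n 1 (\<lambda>k Y X. dArr n 0 cb k Y X + 0)"
    using e by (simp add: dEnd_Mat' zeroE_Mat[of n 1] addE_Mat)
  have "arrB r u w 0 (P i) (P i) = dArr n 0 cb 0 (P i) (P i) + 0"
    by (rule Mat_entry[OF e']) (use i in \<open>simp add: rel_def\<close>)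
  hence r: "r i = 0" by (simp add: arrB_def dArr0_PP[OF n i])
  have h1: "arrB r u w (-1) (P i) (H 1) = dArr n 0 cb (-1) (P i) (H 1) + 0"
    by (rule Mat_entry[OF e']) (use i in \<open>simp add: rel_def\<close>)
  have h2: "arrB r u w (-1) (P i) (H 2) = dArr n 0 cb (-1) (P i) (H 2) + 0"
    by (rule Mat_entry[OF e']) (use i in \<open>simp add: rel_def\<close>)
  have "u i = 0" using h1 h2 by (simp only: dArr0_PH1[OF n i] dArr0_PH2[OF n i]) (simp add: arrB_def add_eq_0_iff)
  thus ?thesis using r by simp
qed

lemma inj_2:
  assumes n: "2 \<le> n" and e: "Mat n 2 (arrC c) = addE (dEnd n 1 (Mat n 1 cb)) zeroE"
  shows "(\<Sum>i=1..n. c i) = 0"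
proof -
  have e': "Mat n 2 (arrC c) = Mat n 2 (\<lambda>k Y X. dArr n 1 cb k Y X + 0)"
    using e by (simp add: dEnd_Mat' zeroE_Mat[of n 2] addE_Mat one_add_one)
  define y where "y i = cb (-1) (E i) (H 1) + cb (-1) (E i) (H 2)" for i
  have "c i = y i - y (succc n i)" if "1 \<le> i" "i \<le> n" for i
  proof -
    have h1: "arrC c (-1) (P i) (H 1) = dArr n 1 cb (-1) (P i) (H 1) + 0"
      by (rule Mat_entry[OF e']) (use that in \<open>simp add: rel_def\<close>)
    have h2: "arrC c (-1) (P i) (H 2) = dArr n 1 cb (-1) (P i) (H 2) + 0"
      by (rule Mat_entry[OF e']) (use that in \<open>simp add: rel_def\<close>)
    define S where "S = cb 0 (P i) (E i) + cb 0 (P i) (E (succc n i))"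
    have c1: "c i = cb (-1) (E i) (H 1) - cb (-1) (E (succc n i)) (H 1) + S"
      using h1 unfolding S_def by (simp only: dArr1_PH1[OF n that]) (simp add: arrC_def)
    have c2: "0 = cb (-1) (E i) (H 2) - cb (-1) (E (succc n i)) (H 2) - S"
      using h2 unfolding S_def by (simp only: dArr1_PH2[OF n that]) (simp add: arrC_def)
    have "c i = (cb (-1) (E i) (H 1) - cb (-1) (E (succc n i)) (H 1) + S)
        + (cb (-1) (E i) (H 2) - cb (-1) (E (succc n i)) (H 2) - S)" using c1 c2 by simp
    thus ?thesis unfolding y_def by (simp add: algebra_simps)
  qed
  hence "(\<Sum>i=1..n. c i) = (\<Sum>i=1..n. y i - y (succc n i))" by (intro sum.cong) auto
  also have "\<dots> = 0" by (rule cyc_tel) (use n in simp)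
  finally show ?thesis .
qed

lemma qbdryE_zero: "qbdry n (EndJ n) zeroG p (subE zeroE zeroE)"
proof -
  have "subE zeroE zeroE = addE (dEnd n (p - 1) zeroE) zeroE" by (simp add: subE_self dEnd_zero)
  thus ?thesis unfolding qbdry_def zeroG_def using zero_EndJ by blast
qed

lemma Q3: assumes n: "2 \<le> n"
  shows "qis n (UU n) zeroG (EndJ n) (zeroG :: int \<Rightarrow> 'r::idom endo set)"
  unfolding qis_def
proof (intro allI conjI ballI impI)
  fix p and a :: "'r endo"
  assume ac: "a \<in> qcycles n (UU n) zeroG p" and ab: "qbdry n (EndJ n) zeroG p a"
  from ac have aU: "a \<in> UU n p" and da: "dEnd n p a = zeroE"
    unfolding qcycles_def zeroG_def by auto
  from ab obtain b where bE: "b \<in> EndJ n (p - 1)" and ax: "a = addE (dEnd n (p - 1) b) zeroE"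
    unfolding qbdry_def zeroG_def by blast
  obtain cb where b: "b = Mat n (p - 1) cb" using EndJ_repr[OF bE] by blast
  have zz: "zeroE = addE (dEnd n (p - 1) zeroE) zeroE" by (simp add: dEnd_zero)
  show "qbdry n (UU n) zeroG p a"
    using aU
  proof (cases rule: UU_E)
    case (A r s t)
    have "Mat n 1 (arrB (\<lambda>_. 0) (\<lambda>_. 0) (\<lambda>_. t)) = Mat n 1 (arrB (\<lambda>_. 0) (\<lambda>_. 0) (\<lambda>_. 0))"
      using da A by (simp add: dA[OF n] zeroB[of n, symmetric])
    from eqB[OF this, of 1] n have t: "t = 0" by simp
    have "a = zeroE"
      using inj_0[OF n, of r s cb] ax A b t by simp
    thus ?thesis using zz zero_UU unfolding qbdry_def zeroG_def by blast
  next
    case (B r u w)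
    have da': "dEnd n 1 (Mat n 1 (arrB r u w)) = zeroE" using da B by simp
    have ru: "r i = 0 \<and> u i = 0" if "1 \<le> i" "i \<le> n" for i
      using inj_1[OF n _ that, of r u w cb] ax B b by simp
    have "a = dEnd n 0 (Mat n 0 (arrA (\<lambda>_. 0) 0 (w n)))"
      unfolding B(2) dA[OF n]
    proof (rule congB)
      fix i assume i: "1 \<le> i" "i \<le> n"
      show "r i = 0 \<and> u i = 0 \<and> w i = w n" using ru[OF i] B_cycle_const[OF n da' i] by simp
    qed
    hence "a = addE (dEnd n (p - 1) (Mat n 0 (arrA (\<lambda>_. 0) 0 (w n)))) zeroE"
      using B by (simp add: addE_zero_right)
    moreover have "Mat n 0 (arrA (\<lambda>_. 0) 0 (w n)) \<in> UU n (p - 1)" using B by simp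
    ultimately show ?thesis unfolding qbdry_def zeroG_def by blast
  next
    case (C c)
    have "(\<Sum>i=1..n. c i) = 0" using inj_2[OF n, of c cb] ax C b by simp
    hence "a = dEnd n 1 (Mat n 1 (arrB (\<lambda>_. 0) (\<lambda>_. 0) (\<lambda>i. \<Sum>m=i..n. c m)))"
      unfolding C(2) by (rule telescope[OF n])
    hence "a = addE (dEnd n (p - 1) (Mat n 1 (arrB (\<lambda>_. 0) (\<lambda>_. 0) (\<lambda>i. \<Sum>m=i..n. c m)))) zeroE"
      using C by (simp add: addE_zero_right)
    moreover have "Mat n 1 (arrB (\<lambda>_. 0) (\<lambda>_. 0) (\<lambda>i. \<Sum>m=i..n. c m)) \<in> UU n (p - 1)" using C by simp
    ultimately show ?thesis unfolding qbdry_def zeroG_def by blast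
  next
    case Z
    thus ?thesis using zz zero_UU unfolding qbdry_def zeroG_def by blast
  qed
next
  fix p and b :: "'r endo"
  assume bc: "b \<in> qcycles n (EndJ n) zeroG p"
  from bc have bE: "b \<in> EndJ n p" and db: "dEnd n p b = zeroE" unfolding qcycles_def zeroG_def by auto
  obtain cb where b: "b = Mat n p cb" using EndJ_repr[OF bE] by blast
  have fromac: "\<exists>a\<in>qcycles n (UU n) zeroG p. qbdry n (EndJ n) zeroG p (subE b a)"
    if "a \<in> UU n p" "dEnd n p a = zeroE" "c \<in> EndJ n (p - 1)" "subE b a = addE (dEnd n (p - 1) c) zeroE" for a c
  proof -
    have "a \<in> qcycles n (UU n) zeroG p" using that unfolding qcycles_def zeroG_def by auto
    moreover have "qbdry n (EndJ n) zeroG p (subE b a)" using that unfolding qbdry_def zeroG_def by blast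
    ultimately show ?thesis by blast
  qed
  have zcase: "\<exists>a\<in>qcycles n (UU n) zeroG p. qbdry n (EndJ n) zeroG p (subE b a)" if "b = zeroE"
  proof -
    have "zeroE \<in> qcycles n (UU n) zeroG p" using zero_UU dEnd_zero unfolding qcycles_def zeroG_def by blast
    thus ?thesis using qbdryE_zero that by blast
  qed
  show "\<exists>a\<in>qcycles n (UU n) zeroG p. qbdry n (EndJ n) zeroG p (subE b a)"
  proof (cases "p = -1")
    case True
    hence "b = zeroE" using cyc_m1[OF n, of cb] db b by simp
    thus ?thesis by (rule zcase)
  next
    case m1: False
    show ?thesis
    proof (cases "p = 0")
      case True
      from cyc_0[OF n, of cb] db b True obtain a c where "a \<in> UU n 0" "dEnd n 0 a = zeroE" "c \<in> EndJ n (-1)"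
        "subE (Mat n 0 cb) a = addE (dEnd n (-1) c) zeroE" by auto
      thus ?thesis using fromac True b by simp
    next
      case p0: False
      show ?thesis
      proof (cases "p = 1")
        case True
        from cyc_1[OF n, of cb] db b True obtain a c where "a \<in> UU n 1" "dEnd n 1 a = zeroE" "c \<in> EndJ n 0"
          "subE (Mat n 1 cb) a = addE (dEnd n 0 c) zeroE" by auto
        thus ?thesis using fromac True b by simp
      next
        case p1: False
        show ?thesis
        proof (cases "p = 2")
          case True
          from cyc_2[OF n, of cb] obtain a c where "a \<in> UU n 2" "dEnd n 2 a = zeroE" "c \<in> EndJ n 1"
            "subE (Mat n 2 cb) a = addE (dEnd n 1 c) zeroE" by auto
          thus ?thesis using fromac True b by simp
        next
          case False
          hence "b = zeroE" using b m1 p0 p1 Mat_zero_deg by blast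
          thus ?thesis by (rule zcase)
        qed
      qed
    qed
  qed
qed

theorem proposition5p8:
  fixes n :: nat
  assumes "is_pid TYPE('r::idom)"
    and "n \<ge> 2"
  shows "\<exists>(U :: int \<Rightarrow> 'r endo set) (I :: int \<Rightarrow> 'r endo set) (V :: int \<Rightarrow> 'r endo set).
           dg_subalg n U (EndJ n)
         \<and> dg_ideal n I U
         \<and> dg_subalg n V U \<and> (\<forall>p. I p \<subseteq> V p \<and> dEnd n p ` V p \<subseteq> I (p + 1))
         \<and> qis n U zeroG (EndJ n) zeroG
         \<and> qis n U zeroG U I
         \<and> qis n V I U I"
proof -
  have n: "2 \<le> n" using assms(2) by simp
  have "dg_subalg n (UU n :: int \<Rightarrow> 'r endo set) (EndJ n)
         \<and> dg_ideal n (II n) (UU n :: int \<Rightarrow> 'r endo set)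
         \<and> dg_subalg n (VV n) (UU n :: int \<Rightarrow> 'r endo set)
         \<and> (\<forall>p. (II n p :: 'r endo set) \<subseteq> VV n p \<and> dEnd n p ` VV n p \<subseteq> II n (p + 1))
         \<and> qis n (UU n :: int \<Rightarrow> 'r endo set) zeroG (EndJ n) zeroG
         \<and> qis n (UU n :: int \<Rightarrow> 'r endo set) zeroG (UU n) (II n)
         \<and> qis n (VV n :: int \<Rightarrow> 'r endo set) (II n) (UU n) (II n)"
    using U_subalg[OF n] I_ideal[OF n] V_subalg[OF n] II_VV dV_I[OF n] Q3[OF n] Q1[OF n] Q2[OF n]
    by blast
  thus ?thesis by blast
qed

end
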